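(* In the two-unicast setting, suppose $k_{1-2}+k_{2-1}\le\min(k_{12-1},k_{12-2})$. Then every pair of nonnegative integers $(R_1,R_2)$ with $$R_1\le k_{12-1}-k_{2-1},\qquad R_2\le k_{12-2}-k_{1-2}$$ is achievable.
   Context: $G=(V,E)$ is a directed acyclic network with unit-capacity edges (each carrying one symbol of $GF(q)$ per use), sources $s_1,s_2$ (no incoming edges) and terminals $t_1,t_2$ (no outgoing edges); $t_i$ wants the message of $s_i$. For $N_1,N_2\subseteq\{1,2\}$, $k_{N_1-N_2}$ is the minimum cut from $\{s_i:i\in N_1\}$ to $\{t_j:j\in N_2\}$. A linear network code over $GF(q)$: symbols on edges leaving a non-source node are $GF(q)$-linear combinations of the node's incoming symbols; symbols on edges leaving $s_i$ are $GF(q)$-linear combinations of $s_i$'s message symbols. $(R_1,R_2)$ is achievable if for some finite field $GF(q)$ there is a linear network code such that, when $s_i$ observes $R_i$ independent symbols of $GF(q)$, $t_1$ uniquely recovers $s_1$'s message and $t_2$ uniquely recovers $s_2$'s message (neither terminal needs to recover the other source). *)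

theory Defs
  imports "HOL-Algebra.Ring"
begin

text \<open>A network is given by a finite set E of edges (of an arbitrary type, so parallel
  edges are allowed), each edge e going from tail e to head e and carrying one field symbol.\<close>

definition edge_rel :: "'e set \<Rightarrow> ('e \<Rightarrow> 'v) \<Rightarrow> ('e \<Rightarrow> 'v) \<Rightarrow> ('v \<times> 'v) set" where
  "edge_rel E tail head = {(tail e, head e) | e. e \<in> E}"

definition is_cut :: "'e set \<Rightarrow> ('e \<Rightarrow> 'v) \<Rightarrow> ('e \<Rightarrow> 'v) \<Rightarrow> 'v set \<Rightarrow> 'v set \<Rightarrow> 'e set \<Rightarrow> bool" where
  "is_cut E tail head S T C \<longleftrightarrow> C \<subseteq> E \<and>
     (\<forall>s\<in>S. \<forall>t\<in>T. (s, t) \<notin> (edge_rel (E - C) tail head)\<^sup>*)"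

definition mincut :: "'e set \<Rightarrow> ('e \<Rightarrow> 'v) \<Rightarrow> ('e \<Rightarrow> 'v) \<Rightarrow> 'v set \<Rightarrow> 'v set \<Rightarrow> nat" where
  "mincut E tail head S T = Min (card ` {C. is_cut E tail head S T C})"

definition two_unicast_net ::
  "'e set \<Rightarrow> ('e \<Rightarrow> 'v) \<Rightarrow> ('e \<Rightarrow> 'v) \<Rightarrow> 'v \<Rightarrow> 'v \<Rightarrow> 'v \<Rightarrow> 'v \<Rightarrow> bool" where
  "two_unicast_net E tail head s1 s2 t1 t2 \<longleftrightarrow>
     finite E \<and> acyclic (edge_rel E tail head) \<and>
     distinct [s1, s2, t1, t2] \<and>
     (\<forall>e\<in>E. head e \<noteq> s1 \<and> head e \<noteq> s2 \<and> tail e \<noteq> t1 \<and> tail e \<noteq> t2)"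

text \<open>y is the assignment of symbols to edges induced by the linear code (alpha, beta)
  when s1 sends x1 (R1 symbols) and s2 sends x2 (R2 symbols).
  alpha e j: coefficient of the j-th message symbol of the source tail e on edge e;
  beta e' e: coefficient of the symbol on incoming edge e' in the symbol on edge e.\<close>
definition code_edge_symbols ::
  "('k, 'm) ring_scheme \<Rightarrow> 'e set \<Rightarrow> ('e \<Rightarrow> 'v) \<Rightarrow> ('e \<Rightarrow> 'v) \<Rightarrow> 'v \<Rightarrow> 'v \<Rightarrow> nat \<Rightarrow> nat \<Rightarrow>
   ('e \<Rightarrow> nat \<Rightarrow> 'k) \<Rightarrow> ('e \<Rightarrow> 'e \<Rightarrow> 'k) \<Rightarrow> (nat \<Rightarrow> 'k) \<Rightarrow> (nat \<Rightarrow> 'k) \<Rightarrow> ('e \<Rightarrow> 'k) \<Rightarrow> bool" where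
  "code_edge_symbols K E tail head s1 s2 R1 R2 \<alpha> \<beta> x1 x2 y \<longleftrightarrow>
     (\<forall>e\<in>E. y e \<in> carrier K \<and>
        (if tail e = s1 then y e = finsum K (\<lambda>j. \<alpha> e j \<otimes>\<^bsub>K\<^esub> x1 j) {..<R1}
         else if tail e = s2 then y e = finsum K (\<lambda>j. \<alpha> e j \<otimes>\<^bsub>K\<^esub> x2 j) {..<R2}
         else y e = finsum K (\<lambda>e'. \<beta> e' e \<otimes>\<^bsub>K\<^esub> y e') {e' \<in> E. head e' = tail e}))"

definition linear_solution ::
  "('k, 'm) ring_scheme \<Rightarrow> 'e set \<Rightarrow> ('e \<Rightarrow> 'v) \<Rightarrow> ('e \<Rightarrow> 'v) \<Rightarrow> 'v \<Rightarrow> 'v \<Rightarrow> 'v \<Rightarrow> 'v \<Rightarrow>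
   nat \<Rightarrow> nat \<Rightarrow> bool" where
  "linear_solution K E tail head s1 s2 t1 t2 R1 R2 \<longleftrightarrow>
     (\<exists>\<alpha> \<beta>. (\<forall>e\<in>E. \<forall>j. \<alpha> e j \<in> carrier K) \<and> (\<forall>e'\<in>E. \<forall>e\<in>E. \<beta> e' e \<in> carrier K) \<and>
       (\<forall>x1 x2 y x1' x2' y'.
          x1 \<in> {..<R1} \<rightarrow> carrier K \<and> x2 \<in> {..<R2} \<rightarrow> carrier K \<and>
          x1' \<in> {..<R1} \<rightarrow> carrier K \<and> x2' \<in> {..<R2} \<rightarrow> carrier K \<and>
          code_edge_symbols K E tail head s1 s2 R1 R2 \<alpha> \<beta> x1 x2 y \<and>
          code_edge_symbols K E tail head s1 s2 R1 R2 \<alpha> \<beta> x1' x2' y' \<longrightarrow>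
            ((\<forall>e\<in>E. head e = t1 \<longrightarrow> y e = y' e) \<longrightarrow> (\<forall>j<R1. x1 j = x1' j)) \<and>
            ((\<forall>e\<in>E. head e = t2 \<longrightarrow> y e = y' e) \<longrightarrow> (\<forall>j<R2. x2 j = x2' j))))"

text \<open>Achievability: for some finite field (represented, up to isomorphism, with carrier
  a subset of nat) there is a linear solution.\<close>
definition achievable ::
  "'e set \<Rightarrow> ('e \<Rightarrow> 'v) \<Rightarrow> ('e \<Rightarrow> 'v) \<Rightarrow> 'v \<Rightarrow> 'v \<Rightarrow> 'v \<Rightarrow> 'v \<Rightarrow> nat \<Rightarrow> nat \<Rightarrow> bool" where
  "achievable E tail head s1 s2 t1 t2 R1 R2 \<longleftrightarrow>
     (\<exists>K :: nat ring. field K \<and> finite (carrier K) \<and>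
        linear_solution K E tail head s1 s2 t1 t2 R1 R2)"

end

theory Submission
  imports Defs "HOL-Library.Z2" "HOL-Library.Function_Algebras" "HOL-Library.Transitive_Closure_Table"
begin

type_synonym vec = "nat \<Rightarrow> bit"

lemma bit_add_self[simp]: "(a::bit) + a = 0" by (cases a) simp_all
lemma vec_add_self[simp]: "(v::vec) + v = 0" by (rule ext) simp

lemma bit_add_eq0: "(a::bit) + b = 0 \<Longrightarrow> a = b"
  by (cases a; cases b) simp_all

lemma vec_add_eq0: "(a::vec) + b = 0 \<Longrightarrow> a = b"
proof (rule ext)
  fix k assume "a + b = 0"
  then have "a k + b k = 0" by (metis plus_fun_apply zero_fun_apply)
  then show "a k = b k" by (rule bit_add_eq0)
qed

lemma sum_fun_apply: "(sum (f::'i \<Rightarrow> 'a \<Rightarrow> 'b::comm_monoid_add) A) x = (\<Sum>i\<in>A. f i x)"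
  by (induction A rule: infinite_finite_induct) auto

definition unitv :: "nat \<Rightarrow> vec" where "unitv c = (\<lambda>k. if k = c then 1 else 0)"
definition span :: "('i \<Rightarrow> vec) \<Rightarrow> 'i set \<Rightarrow> vec set" where
  "span w A = (\<lambda>B. sum w B) ` Pow A"
definition indep :: "('i \<Rightarrow> vec) \<Rightarrow> 'i set \<Rightarrow> bool" where
  "indep w A \<longleftrightarrow> (\<forall>B\<subseteq>A. B \<noteq> {} \<longrightarrow> sum w B \<noteq> 0)"

lemma sum_symdiff:
  assumes "finite A" "finite B"
  shows "sum (w::'i \<Rightarrow> vec) A + sum w B = sum w ((A - B) \<union> (B - A))"
proof -
  have a0: "sum w ((A - B) \<union> (A \<inter> B)) = sum w (A - B) + sum w (A \<inter> B)"
    by (rule sum.union_disjoint) (use assms in auto)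
  have ea: "(A - B) \<union> (A \<inter> B) = A" by blast
  have a: "sum w A = sum w (A - B) + sum w (A \<inter> B)"
    using a0 unfolding ea .
  have b0: "sum w ((B - A) \<union> (A \<inter> B)) = sum w (B - A) + sum w (A \<inter> B)"
    by (rule sum.union_disjoint) (use assms in auto)
  have eb: "(B - A) \<union> (A \<inter> B) = B" by blast
  have b: "sum w B = sum w (B - A) + sum w (A \<inter> B)"
    using b0 unfolding eb .
  have c: "sum w ((A - B) \<union> (B - A)) = sum w (A - B) + sum w (B - A)"
    using assms by (intro sum.union_disjoint) auto
  have "(sum w (A - B) + sum w (A \<inter> B)) + (sum w (B - A) + sum w (A \<inter> B))
        = (sum w (A - B) + sum w (B - A)) + (sum w (A \<inter> B) + sum w (A \<inter> B))"
    by (simp only: ac_simps)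
  also have "\<dots> = sum w (A - B) + sum w (B - A)" by (simp only: vec_add_self add_0_right)
  finally show ?thesis using a b c by metis
qed

lemma span_zero: "0 \<in> span w A"
  unfolding span_def by (rule image_eqI[of _ _ "{}"]) auto

lemma span_add:
  assumes "finite A" "u \<in> span w A" "v \<in> span w A"
  shows "u + v \<in> span w A"
proof -
  obtain B1 B2 where B: "B1 \<subseteq> A" "B2 \<subseteq> A" "u = sum w B1" "v = sum w B2"
    using assms unfolding span_def by blast
  have f: "finite B1" "finite B2" using B(1,2) assms(1) finite_subset by blast+
  have "u + v = sum w ((B1 - B2) \<union> (B2 - B1))" unfolding B(3,4) by (rule sum_symdiff[OF f])
  moreover have "(B1 - B2) \<union> (B2 - B1) \<in> Pow A" using B(1,2) by blast
  ultimately show ?thesis unfolding span_def by (rule image_eqI)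
qed

lemma span_sum:
  assumes "finite A" "finite B" "\<And>b. b \<in> B \<Longrightarrow> f b \<in> span w A"
  shows "sum f B \<in> span w A"
  using assms(2,3)
proof (induction B rule: finite_induct)
  case empty show ?case unfolding sum.empty by (rule span_zero)
next
  case (insert x F) then show ?case unfolding sum.insert[OF insert.hyps] by (intro span_add[OF assms(1)]) auto
qed

lemma span_mono: "A \<subseteq> A' \<Longrightarrow> span w A \<subseteq> span w A'"
  unfolding span_def by auto

lemma span_elem: "a \<in> A \<Longrightarrow> w a \<in> span w A"
  unfolding span_def by (rule image_eqI[of _ _ "{a}"]) auto

lemma finite_span: "finite A \<Longrightarrow> finite (span w A)"
  unfolding span_def by auto

lemma card_span_le: "finite A \<Longrightarrow> card (span w A) \<le> 2 ^ card A"
  unfolding span_def by (rule order_trans[OF card_image_le]) (simp_all add: card_Pow)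

lemma indep_card_span:
  assumes "finite A" "indep w A"
  shows "card (span w A) = 2 ^ card A"
proof -
  have "inj_on (\<lambda>B. sum w B) (Pow A)"
  proof (rule inj_onI)
    fix B1 B2 assume B: "B1 \<in> Pow A" "B2 \<in> Pow A" "sum w B1 = sum w B2"
    then have f: "finite B1" "finite B2" using assms(1) finite_subset by blast+
    have "sum w ((B1 - B2) \<union> (B2 - B1)) = sum w B1 + sum w B2"
      by (rule sum_symdiff[OF f, symmetric])
    also have "\<dots> = 0" unfolding B(3) by (rule vec_add_self)
    finally have z: "sum w ((B1 - B2) \<union> (B2 - B1)) = 0" .
    have sub: "(B1 - B2) \<union> (B2 - B1) \<subseteq> A" using B(1,2) by blast
    have "(B1 - B2) \<union> (B2 - B1) = {}"
    proof (rule ccontr)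
      assume "(B1 - B2) \<union> (B2 - B1) \<noteq> {}"
      then show False using assms(2) sub z unfolding indep_def by blast
    qed
    then show "B1 = B2" by blast
  qed
  then show ?thesis unfolding span_def using assms(1) by (simp add: card_image card_Pow)
qed

lemma indep_notin_span:
  assumes "finite A" "indep w A" "p \<in> A"
  shows "w p \<notin> span w (A - {p})"
proof
  assume "w p \<in> span w (A - {p})"
  then obtain B where B: "B \<subseteq> A - {p}" "w p = sum w B" unfolding span_def by blast
  have fin: "finite B" using B(1) assms(1) finite_subset by blast
  have pB: "p \<notin> B" using B(1) by blast
  have "sum w (insert p B) = w p + sum w B" by (rule sum.insert[OF fin pB])
  also have "\<dots> = 0" unfolding B(2) by (rule vec_add_self)
  finally have z: "sum w (insert p B) = 0" .
  have "insert p B \<subseteq> A" using B(1) assms(3) by blast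
  then show False using assms(2) z unfolding indep_def by blast
qed

lemma indep_extend:
  assumes "finite J" "indep w J" "x \<notin> J" "\<And>i. i \<in> J \<Longrightarrow> w' i = w i"
    "w' x \<notin> span w J"
  shows "indep w' (insert x J)"
  unfolding indep_def
proof (intro allI impI)
  fix B assume B: "B \<subseteq> insert x J" "B \<noteq> {}"
  have fB: "finite B" using B assms(1) finite_subset by blast
  show "sum w' B \<noteq> 0"
  proof (cases "x \<in> B")
    case False
    then have BJ: "B \<subseteq> J" using B by blast
    have "sum w' B = sum w B" by (rule sum.cong) (use assms(4) BJ in auto)
    moreover have "sum w B \<noteq> 0" using assms(2) BJ B(2) unfolding indep_def by blast
    ultimately show ?thesis by simp
  next
    case True
    have sub: "B - {x} \<subseteq> J" using B by blast
    have e1: "sum w' B = w' x + sum w' (B - {x})" by (rule sum.remove[OF fB True])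
    have e2: "sum w' (B - {x}) = sum w (B - {x})" by (rule sum.cong) (use sub assms(4) in auto)
    show ?thesis
    proof
      assume z: "sum w' B = 0"
      have "w' x + sum w (B - {x}) = sum w' B" unfolding e1 e2 ..
      also have "\<dots> = 0" by (rule z)
      finally have "w' x = sum w (B - {x})" by (rule vec_add_eq0)
      then have "w' x \<in> span w J" unfolding span_def by (rule image_eqI) (use sub in blast)
      then show False using assms(5) by simp
    qed
  qed
qed

lemma two_avoid:
  fixes L :: "'c::ab_group_add \<Rightarrow> vec"
  assumes add: "\<And>a b. L (a + b) = L a + L b"
    and c1: "\<And>u v. u \<in> S1 \<Longrightarrow> v \<in> S1 \<Longrightarrow> u + v \<in> S1"
    and c2: "\<And>u v. u \<in> S2 \<Longrightarrow> v \<in> S2 \<Longrightarrow> u + v \<in> S2"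
    and a1: "L a1 \<notin> S1" and a2: "L a2 \<notin> S2"
  shows "\<exists>c. L c \<notin> S1 \<and> L c \<notin> S2"
proof (cases "L a1 \<in> S2 \<and> L a2 \<in> S1")
  case True
  have k: "\<And>u v::vec. (u + v) + v = u" by (simp add: add.assoc)
  have k2: "\<And>u v::vec. (u + v) + u = v" by (metis add.commute k)
  have "L (a1 + a2) \<notin> S1"
  proof
    assume "L (a1 + a2) \<in> S1"
    then have "L (a1 + a2) + L a2 \<in> S1" using True c1 by blast
    then show False using a1 by (simp add: add k)
  qed
  moreover have "L (a1 + a2) \<notin> S2"
  proof
    assume "L (a1 + a2) \<in> S2"
    then have "L (a1 + a2) + L a1 \<in> S2" using True c2 by blast
    then show False using a2 by (simp add: add k2)
  qed
  ultimately show ?thesis by blast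
next
  case False
  then show ?thesis using a1 a2 by blast
qed

lemma sum_unitv_apply: "finite A \<Longrightarrow> sum unitv A k = (if k \<in> A then 1 else 0)"
  by (simp add: sum_fun_apply unitv_def)

lemma support_in_span:
  assumes "finite J" "\<And>k. k \<notin> J \<Longrightarrow> v k = 0"
  shows "v \<in> span unitv J"
proof -
  have e: "v = sum unitv {k\<in>J. v k = 1}"
  proof (rule ext)
    fix k show "v k = sum unitv {k\<in>J. v k = 1} k"
    proof -
      have f: "finite {k\<in>J. v k = 1}" using assms(1) by simp
      show ?thesis unfolding sum_unitv_apply[OF f] using assms(2)[of k] by (cases "v k") auto
    qed
  qed
  show ?thesis unfolding span_def by (rule image_eqI[where f="\<lambda>B. sum unitv B" and x="{k\<in>J. v k = 1}", OF e]) blast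
qed

definition projv :: "nat set \<Rightarrow> vec \<Rightarrow> vec" where
  "projv J v = (\<lambda>k. if k \<in> J then v k else 0)"

lemma projv_add: "projv J (u + v) = projv J u + projv J v"
  unfolding projv_def by auto

lemma projv_zero: "projv J 0 = 0"
  by (rule ext) (simp add: projv_def)

lemma projv_sum: "projv J (sum f A) = (\<Sum>a\<in>A. projv J (f a))"
proof (induction A rule: infinite_finite_induct)
  case (infinite A) show ?case unfolding sum.infinite[OF infinite] by (rule projv_zero)
next
  case empty show ?case unfolding sum.empty by (rule projv_zero)
next
  case (insert x F) then show ?case unfolding sum.insert[OF insert.hyps] projv_add by simp
qed

lemma key_count:
  fixes w :: "'i \<Rightarrow> vec"
  assumes fT: "finite T" and ST: "S \<subseteq> T" and ind: "indep w S"
    and fJo: "finite Jo"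
    and supp: "\<And>f k. f \<in> T \<Longrightarrow> k \<notin> Jo \<Longrightarrow> k \<notin> Jx \<Longrightarrow> w f k = 0"
    and proj: "card (projv Jx ` span w T) \<le> 2 ^ q"
    and cardS: "card Jo + q \<le> card S"
    and j: "j \<in> Jo"
  shows "unitv j \<in> span w T"
proof -
  define U where "U = span w T"
  define P where "P = projv Jx ` U"
  define K0 where "K0 = {u\<in>U. projv Jx u = 0}"
  have fU: "finite U" unfolding U_def using fT by (rule finite_span)
  have fP: "finite P" unfolding P_def using fU by simp
  have fK0: "finite K0" unfolding K0_def using fU by simp
  have fS: "finite S" using fT ST finite_subset by blast
  have "2 ^ card S = card (span w S)" using indep_card_span[OF fS ind] by simp
  also have "\<dots> \<le> card U" unfolding U_def using span_mono[OF ST] fU U_def by (simp add: card_mono)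
  finally have c1: "2 ^ card S \<le> card U" .
  define fib where "fib z = {u\<in>U. projv Jx u = z}" for z
  have Ueq: "U = (\<Union>z\<in>P. fib z)" unfolding fib_def P_def by blast
  have fibK: "card (fib z) \<le> card K0" if z: "z \<in> P" for z
  proof -
    obtain u0 where u0: "u0 \<in> U" "projv Jx u0 = z" using z unfolding P_def by blast
    have "inj_on (\<lambda>u. u + u0) (fib z)"
      by (rule inj_onI) (metis add_right_cancel)
    moreover have "(\<lambda>u. u + u0) ` fib z \<subseteq> K0"
    proof
      fix x assume "x \<in> (\<lambda>u. u + u0) ` fib z"
      then obtain u where u: "u \<in> U" "projv Jx u = z" "x = u + u0" unfolding fib_def by blast
      have "x \<in> U" unfolding u(3) U_def by (rule span_add[OF fT]) (use u(1) u0(1) U_def in simp_all)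
      moreover have "projv Jx x = 0" unfolding u(3) projv_add u(2) u0(2) by (rule vec_add_self)
      ultimately show "x \<in> K0" unfolding K0_def by blast
    qed
    ultimately show ?thesis using fK0 by (rule card_inj_on_le)
  qed
  have "card U \<le> (\<Sum>z\<in>P. card (fib z))" unfolding Ueq by (rule card_UN_le[OF fP])
  also have "\<dots> \<le> card P * card K0" using fibK sum_bounded_above[of P "\<lambda>z. card (fib z)" "card K0"] by simp
  also have "\<dots> \<le> 2 ^ q * card K0" using proj unfolding P_def U_def by simp
  finally have c2: "card U \<le> 2 ^ q * card K0" .
  have "2 ^ card Jo * 2 ^ q = (2::nat) ^ (card Jo + q)" by (simp add: power_add)
  also have "\<dots> \<le> 2 ^ card S" using cardS by (simp add: power_increasing)
  finally have "2 ^ card Jo * 2 ^ q \<le> 2 ^ q * card K0" using c1 c2 by linarith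
  then have c3: "2 ^ card Jo \<le> card K0" by simp
  define Vo where "Vo = span unitv Jo"
  have fVo: "finite Vo" unfolding Vo_def using fJo by (rule finite_span)
  have cVo: "card Vo \<le> 2 ^ card Jo" unfolding Vo_def using fJo by (rule card_span_le)
  have sub: "K0 \<subseteq> Vo"
  proof
    fix u assume u: "u \<in> K0"
    then have uU: "u \<in> U" and pu: "projv Jx u = 0" unfolding K0_def by auto
    obtain B where B: "B \<subseteq> T" "u = sum w B" using uU unfolding U_def span_def by blast
    show "u \<in> Vo" unfolding Vo_def
    proof (rule support_in_span[OF fJo])
      fix k assume k: "k \<notin> Jo"
      show "u k = 0"
      proof (cases "k \<in> Jx")
        case True
        have "projv Jx u k = 0" unfolding pu by simp
        then show ?thesis using True unfolding projv_def by simp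
      next
        case False
        have "u k = (\<Sum>f\<in>B. w f k)" unfolding B(2) by (rule sum_fun_apply)
        also have "\<dots> = 0" using B(1) supp k False by (intro sum.neutral) blast
        finally show ?thesis .
      qed
    qed
  qed
  have "card K0 = card Vo" using card_mono[OF fVo sub] cVo c3 by linarith
  then have "K0 = Vo" using card_subset_eq[OF fVo sub] by simp
  moreover have "unitv j \<in> Vo" unfolding Vo_def using j by (rule span_elem)
  ultimately show ?thesis unfolding K0_def U_def by blast
qed

lemma mincut_le:
  assumes "finite E" "is_cut E tail head S T C"
  shows "mincut E tail head S T \<le> card C"
proof -
  have "{C. is_cut E tail head S T C} \<subseteq> Pow E" unfolding is_cut_def by auto
  then have "finite {C. is_cut E tail head S T C}" using assms(1) finite_subset by blast
  then show ?thesis unfolding mincut_def using assms(2) by (intro Min_le) auto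
qed

lemma mincut_attained:
  assumes "finite E" "S \<inter> T = {}"
  shows "\<exists>C. is_cut E tail head S T C \<and> card C = mincut E tail head S T"
proof -
  have "{C. is_cut E tail head S T C} \<subseteq> Pow E" unfolding is_cut_def by auto
  then have fin: "finite {C. is_cut E tail head S T C}" using assms(1) finite_subset by blast
  have er: "edge_rel (E - E) tail head = {}" unfolding edge_rel_def by simp
  have "is_cut E tail head S T E" unfolding is_cut_def er rtrancl_empty using assms(2) by auto
  then have ne: "card ` {C. is_cut E tail head S T C} \<noteq> {}" by auto
  have "mincut E tail head S T \<in> card ` {C. is_cut E tail head S T C}"
    unfolding mincut_def using fin ne by (intro Min_in) auto
  then show ?thesis by auto
qed

lemma edge_rel_mono: "A \<subseteq> B \<Longrightarrow> edge_rel A tail head \<subseteq> edge_rel B tail head"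
  unfolding edge_rel_def by auto

lemma mincut_union:
  assumes "finite E" "a \<notin> T" "b \<notin> T"
  shows "mincut E tail head {a, b} T \<le> mincut E tail head {a} T + mincut E tail head {b} T"
proof -
  obtain C1 where C1: "is_cut E tail head {a} T C1" "card C1 = mincut E tail head {a} T"
    using mincut_attained[OF assms(1), of "{a}" T] assms(2) by auto
  obtain C2 where C2: "is_cut E tail head {b} T C2" "card C2 = mincut E tail head {b} T"
    using mincut_attained[OF assms(1), of "{b}" T] assms(3) by auto
  have "is_cut E tail head {a, b} T (C1 \<union> C2)"
    unfolding is_cut_def
  proof (intro conjI ballI)
    show "C1 \<union> C2 \<subseteq> E" using C1 C2 unfolding is_cut_def by auto
    fix s t assume s: "s \<in> {a, b}" and t: "t \<in> T"
    have m1: "(edge_rel (E - (C1 \<union> C2)) tail head)\<^sup>* \<subseteq> (edge_rel (E - C1) tail head)\<^sup>*"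
      by (rule rtrancl_mono, rule edge_rel_mono) auto
    have m2: "(edge_rel (E - (C1 \<union> C2)) tail head)\<^sup>* \<subseteq> (edge_rel (E - C2) tail head)\<^sup>*"
      by (rule rtrancl_mono, rule edge_rel_mono) auto
    show "(s, t) \<notin> (edge_rel (E - (C1 \<union> C2)) tail head)\<^sup>*"
      using s t C1(1) C2(1) m1 m2 unfolding is_cut_def by blast
  qed
  then have "mincut E tail head {a, b} T \<le> card (C1 \<union> C2)" by (rule mincut_le[OF assms(1)])
  also have "\<dots> \<le> card C1 + card C2" by (rule card_Un_le)
  finally show ?thesis using C1 C2 by simp
qed

lemma mincut_sub:
  assumes "finite E" "S \<subseteq> S'" "S' \<inter> T = {}"
  shows "mincut E tail head S T \<le> mincut E tail head S' T"
proof -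
  obtain C where C: "is_cut E tail head S' T C" "card C = mincut E tail head S' T"
    using mincut_attained[OF assms(1,3)] by blast
  have "is_cut E tail head S T C" using C(1) assms(2) unfolding is_cut_def by blast
  then show ?thesis using mincut_le[OF assms(1)] C(2) by metis
qed

lemma path_transfer:
  assumes "rtrancl_path r x xs y"
    "\<And>u v. u \<in> set (x # xs) \<Longrightarrow> v \<in> set (x # xs) \<Longrightarrow> r u v \<Longrightarrow> r' u v"
  shows "rtrancl_path r' x xs y"
  using assms
proof (induction rule: rtrancl_path.induct)
  case (base x) show ?case by (rule rtrancl_path.base)
next
  case (step x y ys z)
  have "r' x y" using step by auto
  moreover have "rtrancl_path r' y ys z" using step by (intro step.IH) auto
  ultimately show ?case by (rule rtrancl_path.step)
qed

locale flownet =
  fixes E :: "'e set" and tail head :: "'e \<Rightarrow> 'v" and s1 s2 t :: 'v and R1 R2 :: nat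
  assumes finE: "finite E"
    and dist: "s1 \<noteq> s2" "s1 \<noteq> t" "s2 \<noteq> t"
    and nohead: "\<And>e. e \<in> E \<Longrightarrow> head e \<noteq> s1 \<and> head e \<noteq> s2"
    and notail: "\<And>e. e \<in> E \<Longrightarrow> tail e \<noteq> t"
begin

definition inF :: "'e set \<Rightarrow> 'v \<Rightarrow> nat" where "inF F v = card {e\<in>F. head e = v}"
definition outF :: "'e set \<Rightarrow> 'v \<Rightarrow> nat" where "outF F v = card {e\<in>F. tail e = v}"
definition bal :: "'e set \<Rightarrow> 'v \<Rightarrow> int" where "bal F v = int (inF F v) - int (outF F v)"
definition res :: "'e set \<Rightarrow> 'v \<Rightarrow> 'v \<Rightarrow> bool" where
  "res F u v \<longleftrightarrow> (\<exists>e\<in>E. (e \<notin> F \<and> tail e = u \<and> head e = v) \<or> (e \<in> F \<and> head e = u \<and> tail e = v))"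
definition cap :: "'v \<Rightarrow> nat" where "cap v = (if v = s1 then R1 else if v = s2 then R2 else 0)"
definition isflow :: "'e set \<Rightarrow> bool" where
  "isflow F \<longleftrightarrow> F \<subseteq> E \<and> (\<forall>v. v \<noteq> s1 \<and> v \<noteq> s2 \<and> v \<noteq> t \<longrightarrow> inF F v = outF F v)
     \<and> (\<forall>v\<in>{s1, s2}. outF F v \<le> cap v)"

lemma card_filter_insert:
  assumes "finite F" "e \<notin> F"
  shows "card {x\<in>insert e F. P x} = card {x\<in>F. P x} + (if P e then 1 else 0)"
proof (cases "P e")
  case True
  then have "{x\<in>insert e F. P x} = insert e {x\<in>F. P x}" by auto
  then show ?thesis using assms True by simp
next
  case False
  then have "{x\<in>insert e F. P x} = {x\<in>F. P x}" by auto
  then show ?thesis using False by simp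
qed

lemma card_filter_remove:
  assumes "finite F" "e \<in> F"
  shows "int (card {x\<in>F - {e}. P x}) = int (card {x\<in>F. P x}) - (if P e then 1 else 0)"
proof -
  have h: "card {x\<in>insert e (F - {e}). P x} = card {x\<in>F - {e}. P x} + (if P e then 1 else 0)"
    using assms by (intro card_filter_insert) auto
  have i: "insert e (F - {e}) = F" using assms by auto
  have "card {x\<in>F. P x} = card {x\<in>F - {e}. P x} + (if P e then 1 else 0)"
    using h unfolding i .
  moreover have ar: "\<And>a b c::nat. b = a + c \<Longrightarrow> int a = int b - int c" by simp
  ultimately have r: "int (card {x\<in>F - {e}. P x}) = int (card {x\<in>F. P x}) - int (if P e then 1 else 0)"
    by blast
  have c: "int (if P e then 1 else 0) = (if P e then 1 else 0)" by simp
  show ?thesis using r unfolding c .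
qed

lemma bal_insert:
  assumes "finite F" "e \<notin> F"
  shows "bal (insert e F) v = bal F v + (if head e = v then 1 else 0) - (if tail e = v then 1 else 0)"
  unfolding bal_def inF_def outF_def
  using card_filter_insert[OF assms, of "\<lambda>x. head x = v"] card_filter_insert[OF assms, of "\<lambda>x. tail x = v"]
  by simp

lemma bal_remove:
  assumes "finite F" "e \<in> F"
  shows "bal (F - {e}) v = bal F v - (if head e = v then 1 else 0) + (if tail e = v then 1 else 0)"
  unfolding bal_def inF_def outF_def
  using card_filter_remove[OF assms, of "\<lambda>x. head x = v"] card_filter_remove[OF assms, of "\<lambda>x. tail x = v"]
  by simp

lemma aug:
  assumes "rtrancl_path (res F) a xs b" "distinct (a # xs)" "F \<subseteq> E"
  shows "\<exists>F'. F' \<subseteq> E \<and> (\<forall>v. bal F' v = bal F v - (if v = a then 1 else 0) + (if v = b then 1 else 0))"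
  using assms
proof (induction xs arbitrary: a F)
  case Nil
  then have "a = b" by (auto elim: rtrancl_path.cases)
  then show ?case using Nil by auto
next
  case (Cons c ys)
  from Cons.prems(1) have rac: "res F a c" and pc: "rtrancl_path (res F) c ys b"
    by (auto elim: rtrancl_path.cases)
  obtain e where e: "e \<in> E" "(e \<notin> F \<and> tail e = a \<and> head e = c) \<or> (e \<in> F \<and> head e = a \<and> tail e = c)"
    using rac unfolding res_def by blast
  define F1 where "F1 = (if e \<in> F then F - {e} else insert e F)"
  have fF: "finite F" using Cons.prems(3) finE finite_subset by blast
  have F1E: "F1 \<subseteq> E" unfolding F1_def using Cons.prems(3) e(1) by auto
  have b1: "bal F1 v = bal F v - (if v = a then 1 else 0) + (if v = c then 1 else 0)" for v
  proof (cases "e \<in> F")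
    case True
    then have "head e = a" "tail e = c" using e(2) by auto
    then show ?thesis unfolding F1_def using True bal_remove[OF fF True, of v] by auto
  next
    case False
    then have "tail e = a" "head e = c" using e(2) by auto
    then show ?thesis unfolding F1_def using False bal_insert[OF fF False, of v] by auto
  qed
  have ea: "tail e = a \<or> head e = a" using e(2) by auto
  have anot: "a \<notin> set (c # ys)" using Cons.prems(2) by simp
  have pc1: "rtrancl_path (res F1) c ys b"
  proof (rule path_transfer[OF pc])
    fix u v assume u: "u \<in> set (c # ys)" and v: "v \<in> set (c # ys)" and r: "res F u v"
    then obtain e' where e': "e' \<in> E" "(e' \<notin> F \<and> tail e' = u \<and> head e' = v) \<or> (e' \<in> F \<and> head e' = u \<and> tail e' = v)"
      unfolding res_def by blast
    have "u \<noteq> a" "v \<noteq> a" using u v anot by auto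
    then have "e' \<noteq> e" using e' ea by auto
    then have "e' \<in> F1 \<longleftrightarrow> e' \<in> F" unfolding F1_def by auto
    then show "res F1 u v" unfolding res_def using e' by blast
  qed
  obtain F' where F': "F' \<subseteq> E" "\<forall>v. bal F' v = bal F1 v - (if v = c then 1 else 0) + (if v = b then 1 else 0)"
    using Cons.IH[OF pc1 _ F1E] Cons.prems(2) by auto
  show ?case using F' b1 by (intro exI[of _ F']) auto
qed

lemma inF_src: "F \<subseteq> E \<Longrightarrow> v = s1 \<or> v = s2 \<Longrightarrow> inF F v = 0"
  unfolding inF_def using nohead by (auto simp: card_eq_0_iff)

lemma outF_t: "F \<subseteq> E \<Longrightarrow> outF F t = 0"
  unfolding outF_def using notail by (auto simp: card_eq_0_iff)

theorem maxflow:
  "\<exists>F. isflow F \<and>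
     min (min (R1 + R2) (R1 + mincut E tail head {s2} {t}))
         (min (R2 + mincut E tail head {s1} {t}) (mincut E tail head {s1, s2} {t})) \<le> inF F t"
proof -
  define Fs where "Fs = {F. isflow F}"
  have finFs: "finite Fs" unfolding Fs_def isflow_def using finE
    by (rule finite_subset[rotated, OF finite_Pow_iff[THEN iffD2]]) auto
  have emp: "{} \<in> Fs" unfolding Fs_def isflow_def inF_def outF_def by auto
  obtain F where F: "F \<in> Fs" "\<And>F'. F' \<in> Fs \<Longrightarrow> inF F' t \<le> inF F t"
  proof -
    let ?M = "Max ((\<lambda>F. inF F t) ` Fs)"
    have "?M \<in> (\<lambda>F. inF F t) ` Fs" using finFs emp by (intro Max_in) auto
    then obtain F where "F \<in> Fs" "inF F t = ?M" by auto
    moreover have "\<And>F'. F' \<in> Fs \<Longrightarrow> inF F' t \<le> ?M" using finFs by (intro Max_ge) auto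
    ultimately show ?thesis using that by auto
  qed
  have flF: "isflow F" using F(1) unfolding Fs_def by simp
  have FE: "F \<subseteq> E" using flF unfolding isflow_def by simp
  have fF: "finite F" using FE finE finite_subset by blast
  define Src where "Src = {s\<in>{s1, s2}. outF F s < cap s}"
  define X where "X = {v. \<exists>s\<in>Src. (res F)\<^sup>*\<^sup>* s v}"
  have tX: "t \<notin> X"
  proof
    assume "t \<in> X"
    then obtain s where s: "s \<in> Src" "(res F)\<^sup>*\<^sup>* s t" unfolding X_def by blast
    obtain xs where "rtrancl_path (res F) s xs t" using s(2) rtranclp_eq_rtrancl_path by metis
    then obtain xs' where p: "rtrancl_path (res F) s xs' t" "distinct (s # xs')"
      using rtrancl_path_distinct by metis
    obtain F' where F': "F' \<subseteq> E" "\<forall>v. bal F' v = bal F v - (if v = s then 1 else 0) + (if v = t then 1 else 0)"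
      using aug[OF p FE] by blast
    have sst: "s = s1 \<or> s = s2" "s \<noteq> t" using s(1) dist unfolding Src_def by auto
    have "isflow F'"
      unfolding isflow_def
    proof (intro conjI allI impI ballI)
      show "F' \<subseteq> E" by fact
      fix v assume v: "v \<noteq> s1 \<and> v \<noteq> s2 \<and> v \<noteq> t"
      then have "bal F' v = bal F v" using F'(2) sst by auto
      moreover have "inF F v = outF F v" using flF v unfolding isflow_def by auto
      ultimately show "inF F' v = outF F' v" unfolding bal_def by simp
    next
      fix v assume v: "v \<in> {s1, s2}"
      have i0: "inF F' v = 0" "inF F v = 0" using inF_src F'(1) FE v by auto
      have vt: "v \<noteq> t" using v dist by auto
      show "outF F' v \<le> cap v"
      proof (cases "v = s")
        case True
        then have "int (outF F' v) = int (outF F v) + 1" using F'(2)[rule_format, of v] i0 vt unfolding bal_def by simp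
        moreover have "outF F v < cap v" using s(1) True unfolding Src_def by auto
        ultimately show ?thesis by simp
      next
        case False
        then have "int (outF F' v) = int (outF F v)" using F'(2)[rule_format, of v] i0 vt unfolding bal_def by simp
        moreover have "outF F v \<le> cap v" using flF v unfolding isflow_def by auto
        ultimately show ?thesis by simp
      qed
    qed
    then have "inF F' t \<le> inF F t" using F(2) unfolding Fs_def by auto
    moreover have "int (inF F' t) = int (inF F t) + 1"
      using F'(2)[rule_format, of t] outF_t[OF F'(1)] outF_t[OF FE] sst(2) sst(2)[symmetric] unfolding bal_def by simp
    ultimately show False by simp
  qed
  define C where "C = {e\<in>E. tail e \<in> X \<and> head e \<notin> X}"
  have fC: "finite C" unfolding C_def using finE by simp
  have resX: "v \<in> X" if uX: "u \<in> X" and ruv: "res F u v" for u v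
  proof -
    obtain s where "s \<in> Src" "(res F)\<^sup>*\<^sup>* s u" using uX unfolding X_def by blast
    then show ?thesis unfolding X_def using ruv by (blast intro: rtranclp.rtrancl_into_rtrancl)
  qed
  have i: "e \<in> F" if "e \<in> E" "tail e \<in> X" "head e \<notin> X" for e
    using resX[of "tail e" "head e"] that unfolding res_def by blast
  have ii: "e \<notin> F" if "e \<in> E" "tail e \<notin> X" "head e \<in> X" for e
    using resX[of "head e" "tail e"] that unfolding res_def by blast
  have SrcX: "Src \<subseteq> X" unfolding X_def by auto
  have iii: "outF F s = cap s" if "s \<in> {s1, s2}" "s \<notin> X" for s
  proof -
    have "s \<notin> Src" using that SrcX by auto
    then have "\<not> outF F s < cap s" using that(1) unfolding Src_def by auto
    moreover have "outF F s \<le> cap s" using flF that(1) unfolding isflow_def by auto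
    ultimately show ?thesis by simp
  qed
  have cut: "is_cut E tail head S {t} C" if "S \<subseteq> X" for S
    unfolding is_cut_def
  proof (intro conjI ballI)
    show "C \<subseteq> E" unfolding C_def by auto
    fix s t' assume s: "s \<in> S" and t': "t' \<in> {t}"
    have "v \<in> X" if "(s, v) \<in> (edge_rel (E - C) tail head)\<^sup>*" for v
      using that
    proof (induction rule: rtrancl_induct)
      case base then show ?case using s \<open>S \<subseteq> X\<close> by auto
    next
      case (step y z)
      then obtain e where "e \<in> E - C" "tail e = y" "head e = z" unfolding edge_rel_def by auto
      then show ?case using step.IH unfolding C_def by auto
    qed
    then show "(s, t') \<notin> (edge_rel (E - C) tail head)\<^sup>*" using tX t' by auto
  qed
  define V0 where "V0 = {s1, s2, t} \<union> head ` F \<union> tail ` F"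
  define Y where "Y = V0 - X"
  have fY: "finite Y" unfolding Y_def V0_def using fF by simp
  have sumcard: "(\<Sum>v\<in>Y. card {e\<in>F. f e = v}) = card {e\<in>F. f e \<in> Y}" for f :: "'e \<Rightarrow> 'v"
  proof -
    have "{e\<in>F. f e \<in> Y} = (\<Union>v\<in>Y. {e\<in>F. f e = v})" by auto
    moreover have "card (\<Union>v\<in>Y. {e\<in>F. f e = v}) = (\<Sum>v\<in>Y. card {e\<in>F. f e = v})"
      using fY fF by (intro card_UN_disjoint) auto
    ultimately show ?thesis by simp
  qed
  have hY: "{e\<in>F. head e \<in> Y} = {e\<in>F. head e \<notin> X}" unfolding Y_def V0_def by auto
  have tY: "{e\<in>F. tail e \<in> Y} = {e\<in>F. tail e \<notin> X}" unfolding Y_def V0_def by auto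
  have s1: "(\<Sum>v\<in>Y. bal F v) = int (card {e\<in>F. head e \<notin> X}) - int (card {e\<in>F. tail e \<notin> X})"
    unfolding bal_def inF_def outF_def sum_subtractf using sumcard[of head] sumcard[of tail] hY tY
    by (simp add: of_nat_sum[symmetric])
  have hsplit: "card {e\<in>F. head e \<notin> X} = card C + card {e\<in>F. head e \<notin> X \<and> tail e \<notin> X}"
  proof -
    have "{e\<in>F. head e \<notin> X} = C \<union> {e\<in>F. head e \<notin> X \<and> tail e \<notin> X}"
      unfolding C_def using i FE by blast
    moreover have "C \<inter> {e\<in>F. head e \<notin> X \<and> tail e \<notin> X} = {}" unfolding C_def by blast
    ultimately show ?thesis using fC fF by (simp add: card_Un_disjoint)
  qed
  have tsplit: "{e\<in>F. tail e \<notin> X} = {e\<in>F. head e \<notin> X \<and> tail e \<notin> X}"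
    using ii FE by blast
  have s2: "(\<Sum>v\<in>Y. bal F v) = int (card C)" using s1 hsplit tsplit by simp
  have z: "bal F v = 0" if "v \<in> Y - ({t} \<union> ({s1, s2} - X))" for v
  proof -
    have "v \<noteq> s1" "v \<noteq> s2" "v \<noteq> t" using that unfolding Y_def by auto
    then show ?thesis using flF unfolding isflow_def bal_def by auto
  qed
  have sub: "{t} \<union> ({s1, s2} - X) \<subseteq> Y" unfolding Y_def V0_def using tX by auto
  have "(\<Sum>v\<in>Y. bal F v) = (\<Sum>v\<in>{t} \<union> ({s1, s2} - X). bal F v)"
    using fY sub z by (intro sum.mono_neutral_right) auto
  also have "\<dots> = bal F t + (\<Sum>v\<in>{s1, s2} - X. bal F v)"
    using dist by (subst sum.union_disjoint) auto
  also have "\<dots> = int (inF F t) - (\<Sum>v\<in>{s1, s2} - X. int (cap v))"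
  proof -
    have "bal F v = - int (cap v)" if "v \<in> {s1, s2} - X" for v
      using that iii inF_src[OF FE] unfolding bal_def by auto
    then show ?thesis using outF_t[OF FE] unfolding bal_def by (simp add: sum_negf)
  qed
  finally have key: "int (inF F t) = int (card C) + (\<Sum>v\<in>{s1, s2} - X. int (cap v))" using s2 by simp
  have capv: "cap s1 = R1" "cap s2 = R2" unfolding cap_def using dist by auto
  have "min (min (R1 + R2) (R1 + mincut E tail head {s2} {t}))
         (min (R2 + mincut E tail head {s1} {t}) (mincut E tail head {s1, s2} {t})) \<le> inF F t"
  proof (cases "s1 \<in> X"; cases "s2 \<in> X")
    assume a: "s1 \<in> X" "s2 \<in> X"
    then have "{s1, s2} - X = {}" by auto
    then have "inF F t = card C" using key by simp
    moreover have "mincut E tail head {s1, s2} {t} \<le> card C" using a by (intro mincut_le[OF finE] cut) auto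
    ultimately show ?thesis by simp
  next
    assume a: "s1 \<in> X" "s2 \<notin> X"
    then have "{s1, s2} - X = {s2}" by auto
    then have "inF F t = card C + R2" using key capv by simp
    moreover have "mincut E tail head {s1} {t} \<le> card C" using a by (intro mincut_le[OF finE] cut) auto
    ultimately show ?thesis by simp
  next
    assume a: "s1 \<notin> X" "s2 \<in> X"
    then have "{s1, s2} - X = {s1}" by auto
    then have "inF F t = card C + R1" using key capv by simp
    moreover have "mincut E tail head {s2} {t} \<le> card C" using a by (intro mincut_le[OF finE] cut) auto
    ultimately show ?thesis by simp
  next
    assume a: "s1 \<notin> X" "s2 \<notin> X"
    then have "{s1, s2} - X = {s1, s2}" by auto
    then have "inF F t = card C + R1 + R2" using key capv dist by simp
    then show ?thesis by simp
  qed
  then show ?thesis using flF by blast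
qed

end

definition sc :: "bit \<Rightarrow> vec \<Rightarrow> vec" where "sc c v = (\<lambda>k. c * v k)"

lemma sc_add_left: "sc (a + b) v = sc a v + sc b v"
  unfolding sc_def by (rule ext) (simp only: plus_fun_apply distrib_right)

lemma sc_one: "sc 1 v = v" unfolding sc_def by (simp only: mult_1_left)
lemma sc_zero: "sc 0 v = 0" unfolding sc_def by (rule ext) simp

lemma indep_subset: "indep w A \<Longrightarrow> B \<subseteq> A \<Longrightarrow> indep w B"
  unfolding indep_def by blast

lemma indep_cong: "indep w A \<Longrightarrow> (\<And>i. i \<in> A \<Longrightarrow> w' i = w i) \<Longrightarrow> indep w' A"
  unfolding indep_def
proof (intro allI impI)
  fix B assume a: "\<forall>B\<subseteq>A. B \<noteq> {} \<longrightarrow> sum w B \<noteq> 0" "\<And>i. i \<in> A \<Longrightarrow> w' i = w i"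
    "B \<subseteq> A" "B \<noteq> {}"
  have "sum w' B = sum w B" by (rule sum.cong) (use a in auto)
  moreover have "sum w B \<noteq> 0" using a by blast
  ultimately show "sum w' B \<noteq> 0" by simp
qed

locale net =
  fixes E :: "'e set" and tail head :: "'e \<Rightarrow> 'v" and s1 s2 t1 t2 :: 'v and R1 R2 :: nat
  assumes finE: "finite E"
    and acyc: "acyclic (edge_rel E tail head)"
    and dist: "distinct [s1, s2, t1, t2]"
    and ends: "\<And>e. e \<in> E \<Longrightarrow> head e \<noteq> s1 \<and> head e \<noteq> s2 \<and> tail e \<noteq> t1 \<and> tail e \<noteq> t2"
begin

definition In :: "'e \<Rightarrow> ('e + nat) set" where
  "In e = (if e \<notin> E then {} else if tail e = s1 then Inr ` {..<R1}
      else if tail e = s2 then Inr ` {R1..<R1 + R2} else Inl ` {e'\<in>E. head e' = tail e})"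

definition Rel :: "(('e + nat) \<times> ('e + nat)) set" where
  "Rel = {(i, Inl e) | i e. i \<in> In e}"

lemma finite_In: "finite (In e)"
  unfolding In_def using finE by auto

lemma noloop: "e \<in> E \<Longrightarrow> head e \<noteq> tail e"
proof
  assume "e \<in> E" "head e = tail e"
  then have "(tail e, tail e) \<in> edge_rel E tail head" unfolding edge_rel_def by force
  then show False using acyc unfolding acyclic_def by blast
qed

lemma Inl_In: "Inl e' \<in> In e \<Longrightarrow> e \<in> E \<and> e' \<in> E \<and> head e' = tail e \<and> tail e \<noteq> s1 \<and> tail e \<noteq> s2"
  unfolding In_def by (auto split: if_splits)

lemma Inl_In_self: "Inl e \<notin> In e"
  using Inl_In noloop by blast

lemma wf_edges: "wf (edge_rel E tail head)"
proof (rule finite_acyclic_wf)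
  show "finite (edge_rel E tail head)" unfolding edge_rel_def using finE by simp
qed (rule acyc)

lemma wf_edges_conv: "wf ((edge_rel E tail head)\<inverse>)"
proof (rule finite_acyclic_wf_converse)
  show "finite (edge_rel E tail head)" unfolding edge_rel_def using finE by simp
qed (rule acyc)

lemma wfRel: "wf Rel"
proof -
  define A :: "(('e + nat) \<times> ('e + nat)) set" where "A = {(Inl e', Inl e) | e' e. Inl e' \<in> In e}"
  define B :: "(('e + nat) \<times> ('e + nat)) set" where "B = {(Inr c, Inl e) | c e. Inr c \<in> In e}"
  have "Rel = B \<union> A" unfolding Rel_def A_def B_def
    by (auto, metis sum.exhaust)
  moreover have "wf B"
    by (rule wf_subset[of "measure (\<lambda>i. case i of Inl _ \<Rightarrow> 1 | Inr _ \<Rightarrow> 0)"]) (auto simp: B_def)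
  moreover have "wf A"
  proof (rule wf_subset)
    show "wf (inv_image (edge_rel E tail head) (\<lambda>i. case i of Inl e \<Rightarrow> tail e | Inr _ \<Rightarrow> s1))"
      using wf_edges by simp
    show "A \<subseteq> inv_image (edge_rel E tail head) (\<lambda>i. case i of Inl e \<Rightarrow> tail e | Inr _ \<Rightarrow> s1)"
      unfolding A_def edge_rel_def using Inl_In by force
  qed
  moreover have "Domain B \<inter> Range A = {}" unfolding A_def B_def by auto
  ultimately show ?thesis using wf_Un by metis
qed

definition gv :: "(('e + nat) \<Rightarrow> 'e \<Rightarrow> bit) \<Rightarrow> ('e + nat) \<Rightarrow> vec" where
  "gv \<gamma> = wfrec Rel (\<lambda>f it. case it of Inl e \<Rightarrow> (\<Sum>i\<in>In e. sc (\<gamma> i e) (f i)) | Inr c \<Rightarrow> unitv c)"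

lemma gv_Inl: "gv \<gamma> (Inl e) = (\<Sum>i\<in>In e. sc (\<gamma> i e) (gv \<gamma> i))"
proof -
  have "gv \<gamma> (Inl e) = (\<Sum>i\<in>In e. sc (\<gamma> i e) (cut (gv \<gamma>) Rel (Inl e) i))"
    unfolding gv_def by (subst wfrec[OF wfRel]) simp
  also have "\<dots> = (\<Sum>i\<in>In e. sc (\<gamma> i e) (gv \<gamma> i))"
    by (rule sum.cong) (auto simp: cut_apply Rel_def)
  finally show ?thesis .
qed

lemma gv_Inr: "gv \<gamma> (Inr c) = unitv c"
  unfolding gv_def by (subst wfrec[OF wfRel]) simp

definition dc :: "'e set \<Rightarrow> bool" where
  "dc D \<longleftrightarrow> D \<subseteq> E \<and> (\<forall>e\<in>D. \<forall>e'. Inl e' \<in> In e \<longrightarrow> e' \<in> D)"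

definition Done :: "'e set \<Rightarrow> ('e + nat) set" where
  "Done D = Inl ` D \<union> range Inr"

lemma dc_In: "dc D \<Longrightarrow> e \<in> D \<Longrightarrow> In e \<subseteq> Done D"
  unfolding dc_def Done_def by (auto, metis sum.exhaust rangeI image_eqI)

lemma locality:
  assumes "dc D" "\<And>e i. e \<in> D \<Longrightarrow> \<gamma>' i e = \<gamma> i e"
  shows "it \<in> Done D \<Longrightarrow> gv \<gamma>' it = gv \<gamma> it"
proof (induction it rule: wf_induct_rule[OF wfRel])
  case (1 it)
  show ?case
  proof (cases it)
    case (Inr c) then show ?thesis by (simp add: gv_Inr)
  next
    case (Inl e)
    then have eD: "e \<in> D" using 1(2) unfolding Done_def by auto
    have "gv \<gamma>' (Inl e) = (\<Sum>i\<in>In e. sc (\<gamma>' i e) (gv \<gamma>' i))" by (rule gv_Inl)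
    also have "\<dots> = (\<Sum>i\<in>In e. sc (\<gamma> i e) (gv \<gamma> i))"
    proof (rule sum.cong)
      fix i assume i: "i \<in> In e"
      have "(i, it) \<in> Rel" using i Inl unfolding Rel_def by auto
      moreover have "i \<in> Done D" using dc_In[OF assms(1) eD] i by auto
      ultimately have "gv \<gamma>' i = gv \<gamma> i" using 1(1) by blast
      then show "sc (\<gamma>' i e) (gv \<gamma>' i) = sc (\<gamma> i e) (gv \<gamma> i)" using assms(2)[OF eD] by simp
    qed simp
    also have "\<dots> = gv \<gamma> (Inl e)" by (rule gv_Inl[symmetric])
    finally show ?thesis using Inl by simp
  qed
qed

definition good_pred :: "'e set \<Rightarrow> ('e \<Rightarrow> 'e + nat) \<Rightarrow> 'v \<Rightarrow> bool" where
  "good_pred F p t \<longleftrightarrow> F \<subseteq> E \<and> (\<forall>e\<in>F. p e \<in> In e) \<and> inj_on p F \<and>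
     (\<forall>e\<in>F. \<forall>e'. p e = Inl e' \<longrightarrow> e' \<in> F) \<and> (\<forall>e\<in>F. head e \<noteq> t \<longrightarrow> (\<exists>e''\<in>F. p e'' = Inl e))"

definition Fr :: "'e set \<Rightarrow> ('e \<Rightarrow> 'e + nat) \<Rightarrow> 'e set \<Rightarrow> ('e + nat) set" where
  "Fr F p D = {it \<in> Inl ` (F \<inter> D) \<union> (p ` F \<inter> range Inr). \<forall>e\<in>F \<inter> D. p e \<noteq> it}"

lemma finite_Fr: "good_pred F p t \<Longrightarrow> finite (Fr F p D)"
proof -
  assume "good_pred F p t"
  then have "finite F" unfolding good_pred_def using finE finite_subset by blast
  moreover have "Fr F p D \<subseteq> Inl ` F \<union> p ` F" unfolding Fr_def by auto
  ultimately show ?thesis using finite_subset by blast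
qed

lemma Fr_Done: "Fr F p D \<subseteq> Done D"
  unfolding Fr_def Done_def by auto

lemma Fr_empty: "Fr F p {} \<subseteq> range Inr"
  unfolding Fr_def by auto

lemma indep_Inr:
  assumes "finite B0" "B0 \<subseteq> range Inr"
  shows "indep (gv \<gamma>) B0"
  unfolding indep_def
proof (intro allI impI)
  fix B assume B: "B \<subseteq> B0" "B \<noteq> {}"
  then obtain c where c: "Inr c \<in> B" using assms(2) by blast
  have fB: "finite B" using B assms(1) finite_subset by blast
  have "sum (gv \<gamma>) B c = (\<Sum>i\<in>B. gv \<gamma> i c)" by (rule sum_fun_apply)
  also have "\<dots> = (\<Sum>i\<in>B. if i = Inr c then 1 else 0)"
  proof (rule sum.cong)
    fix i assume "i \<in> B"
    then obtain c' where "i = Inr c'" using B assms(2) by blast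
    then show "gv \<gamma> i c = (if i = Inr c then 1 else 0)" by (auto simp: gv_Inr unitv_def)
  qed simp
  also have "\<dots> = 1" using fB c by simp
  finally show "sum (gv \<gamma>) B \<noteq> 0" by (metis zero_fun_apply zero_neq_one)
qed

lemma Fr_step:
  assumes gp: "good_pred F p t" and dcD: "dc D" and e: "e \<in> E" "e \<notin> D"
    and InD: "In e \<subseteq> Done D"
  shows "e \<in> F \<Longrightarrow> p e \<in> Fr F p D \<and> Inl e \<notin> Fr F p D \<and> Fr F p (insert e D) = insert (Inl e) (Fr F p D - {p e})"
    and "e \<notin> F \<Longrightarrow> Fr F p (insert e D) = Fr F p D"
proof -
  have pIn: "\<And>x. x \<in> F \<Longrightarrow> p x \<in> In x" and inj: "inj_on p F"
    and pF: "\<And>x e'. x \<in> F \<Longrightarrow> p x = Inl e' \<Longrightarrow> e' \<in> F" and FE: "F \<subseteq> E"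
    using gp unfolding good_pred_def by auto
  have noD: "p x \<noteq> Inl e" if "x \<in> F" "x \<in> D" for x
  proof
    assume "p x = Inl e"
    then have "Inl e \<in> In x" using pIn[OF that(1)] by simp
    then show False using dcD e(2) that(2) unfolding dc_def by blast
  qed
  {
    assume eF: "e \<in> F"
    have peD: "p e \<in> Done D" using InD pIn[OF eF] by auto
    have pe: "p e \<in> Fr F p D"
      unfolding Fr_def
    proof (intro CollectI conjI ballI)
      show "p e \<in> Inl ` (F \<inter> D) \<union> (p ` F \<inter> range Inr)"
        using peD pF[OF eF] eF unfolding Done_def by auto
      fix x assume "x \<in> F \<inter> D"
      then show "p x \<noteq> p e" using inj eF e(2) unfolding inj_on_def by auto
    qed
    have ne: "Inl e \<notin> Fr F p D" unfolding Fr_def using e(2) by auto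
    have "Fr F p (insert e D) = insert (Inl e) (Fr F p D - {p e})"
    proof (rule subset_antisym; rule subsetI)
      fix it assume it: "it \<in> Fr F p (insert e D)"
      then show "it \<in> insert (Inl e) (Fr F p D - {p e})"
        unfolding Fr_def using eF by auto
    next
      fix it assume it: "it \<in> insert (Inl e) (Fr F p D - {p e})"
      show "it \<in> Fr F p (insert e D)"
      proof (cases "it = Inl e")
        case True
        have "p x \<noteq> Inl e" if "x \<in> F \<inter> insert e D" for x
        proof (cases "x = e")
          case True then show ?thesis using pIn[OF eF] Inl_In_self by metis
        next
          case False then show ?thesis using that noD by auto
        qed
        then show ?thesis unfolding Fr_def using True eF by auto
      next
        case False
        then have "it \<in> Fr F p D" "it \<noteq> p e" using it by auto
        then show ?thesis unfolding Fr_def by auto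
      qed
    qed
    then show "p e \<in> Fr F p D \<and> Inl e \<notin> Fr F p D \<and> Fr F p (insert e D) = insert (Inl e) (Fr F p D - {p e})"
      using pe ne by blast
  }
  assume eF: "e \<notin> F"
  show "Fr F p (insert e D) = Fr F p D" unfolding Fr_def using eF by auto
qed

end

context net
begin

lemma L_ind:
  assumes "q \<in> In e"
  shows "(\<Sum>i\<in>In e. sc (if i = q then 1 else 0) (w i)) = w q"
proof -
  have "(\<Sum>i\<in>In e. sc (if i = q then 1 else 0) (w i)) = (\<Sum>i\<in>In e. if i = q then w i else 0)"
    by (rule sum.cong) (auto simp: sc_one sc_zero)
  also have "\<dots> = w q" using finite_In assms by (subst sum.delta) auto
  finally show ?thesis .
qed

lemma L_add: "(\<Sum>i\<in>In e. sc ((a + b) i) (w i)) = (\<Sum>i\<in>In e. sc (a i) (w i)) + (\<Sum>i\<in>In e. sc (b i) (w i))"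
  by (simp only: plus_fun_apply sc_add_left sum.distrib)

lemma extend_one:
  assumes gp: "good_pred F p t" and dc0: "dc D0" and e: "e \<in> E" "e \<notin> D0" and InD: "In e \<subseteq> Done D0"
    and ind: "indep (gv \<gamma>) (Fr F p D0)"
    and loc: "\<And>it. it \<in> Done D0 \<Longrightarrow> gv \<gamma>' it = gv \<gamma> it"
    and new: "e \<in> F \<Longrightarrow> gv \<gamma>' (Inl e) \<notin> span (gv \<gamma>) (Fr F p D0 - {p e})"
  shows "indep (gv \<gamma>') (Fr F p (insert e D0))"
proof (cases "e \<in> F")
  case True
  note st = Fr_step(1)[OF gp dc0 e InD True]
  have fJ: "finite (Fr F p D0 - {p e})" using finite_Fr[OF gp] by simp
  have "indep (gv \<gamma>') (insert (Inl e) (Fr F p D0 - {p e}))"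
  proof (rule indep_extend[OF fJ])
    show "indep (gv \<gamma>) (Fr F p D0 - {p e})" using ind by (rule indep_subset) auto
    show "Inl e \<notin> Fr F p D0 - {p e}" using st by auto
    show "gv \<gamma>' i = gv \<gamma> i" if "i \<in> Fr F p D0 - {p e}" for i
      using that Fr_Done loc by blast
    show "gv \<gamma>' (Inl e) \<notin> span (gv \<gamma>) (Fr F p D0 - {p e})" by (rule new[OF True])
  qed
  then show ?thesis using st by simp
next
  case False
  have "Fr F p (insert e D0) = Fr F p D0" by (rule Fr_step(2)[OF gp dc0 e InD False])
  moreover have "indep (gv \<gamma>') (Fr F p D0)"
    using ind by (rule indep_cong) (use Fr_Done loc in blast)
  ultimately show ?thesis by simp
qed

lemma greedy:
  assumes gp1: "good_pred F1 p1 t1" and gp2: "good_pred F2 p2 t2"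
  shows "dc D \<Longrightarrow> card D = n \<Longrightarrow> \<exists>\<gamma>. indep (gv \<gamma>) (Fr F1 p1 D) \<and> indep (gv \<gamma>) (Fr F2 p2 D)"
proof (induction n arbitrary: D)
  case 0
  then have "D = {}" using finE finite_subset unfolding dc_def by (metis card_0_eq)
  then show ?case
    using indep_Inr[OF finite_Fr[OF gp1] Fr_empty] indep_Inr[OF finite_Fr[OF gp2] Fr_empty] by blast
next
  case (Suc n)
  have DE: "D \<subseteq> E" using Suc.prems(1) unfolding dc_def by simp
  have "D \<noteq> {}" using Suc.prems(2) by auto
  then obtain e0 where "e0 \<in> D" by blast
  then have "tail e0 \<in> tail ` D" by simp
  then obtain z where z: "z \<in> tail ` D" "\<And>y. (y, z) \<in> (edge_rel E tail head)\<inverse> \<Longrightarrow> y \<notin> tail ` D"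
    using wfE_min[OF wf_edges_conv] by metis
  then obtain e where eD: "e \<in> D" and ze: "tail e = z" by blast
  have maxe: "Inl e \<notin> In x" if "x \<in> D" for x
  proof
    assume "Inl e \<in> In x"
    then have "e \<in> E" "head e = tail x" using Inl_In by auto
    then have "(tail x, tail e) \<in> (edge_rel E tail head)\<inverse>" unfolding edge_rel_def by force
    then show False using z(2) that ze by auto
  qed
  define D0 where "D0 = D - {e}"
  have eE: "e \<in> E" using eD DE by auto
  have eD0: "e \<notin> D0" unfolding D0_def by simp
  have Dins: "D = insert e D0" unfolding D0_def using eD by auto
  have dc0: "dc D0" unfolding dc_def D0_def
  proof (intro conjI ballI allI impI)
    show "D - {e} \<subseteq> E" using DE by auto
    fix x e' assume x: "x \<in> D - {e}" and i: "Inl e' \<in> In x"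
    then have "e' \<in> D" using Suc.prems(1) unfolding dc_def by auto
    moreover have "e' \<noteq> e" using maxe x i by auto
    ultimately show "e' \<in> D - {e}" by simp
  qed
  have cD0: "card D0 = n" unfolding D0_def using Suc.prems(2) eD by simp
  obtain \<gamma> where ind1: "indep (gv \<gamma>) (Fr F1 p1 D0)" and ind2: "indep (gv \<gamma>) (Fr F2 p2 D0)"
    using Suc.IH[OF dc0 cD0] by blast
  have InD: "In e \<subseteq> Done D0"
  proof
    fix i assume i: "i \<in> In e"
    show "i \<in> Done D0"
    proof (cases i)
      case (Inl e')
      then have "e' \<in> D" using Suc.prems(1) eD i unfolding dc_def by auto
      moreover have "e' \<noteq> e" using Inl i Inl_In_self by auto
      ultimately show ?thesis using Inl unfolding Done_def D0_def by auto
    next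
      case (Inr c) then show ?thesis unfolding Done_def by auto
    qed
  qed
  define L where "L col = (\<Sum>i\<in>In e. sc (col i) (gv \<gamma> i))" for col :: "('e + nat) \<Rightarrow> bit"
  define S1 where "S1 = (if e \<in> F1 then span (gv \<gamma>) (Fr F1 p1 D0 - {p1 e}) else {})"
  define S2 where "S2 = (if e \<in> F2 then span (gv \<gamma>) (Fr F2 p2 D0 - {p2 e}) else {})"
  have Ladd: "L (a + b) = L a + L b" for a b unfolding L_def by (rule L_add)
  have cl1: "u + v \<in> S1" if "u \<in> S1" "v \<in> S1" for u v
    using that finite_Fr[OF gp1] unfolding S1_def by (auto split: if_splits intro: span_add)
  have cl2: "u + v \<in> S2" if "u \<in> S2" "v \<in> S2" for u v
    using that finite_Fr[OF gp2] unfolding S2_def by (auto split: if_splits intro: span_add)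
  have av: "L (\<lambda>i. if i = p e then 1 else 0) \<notin> (if e \<in> F then span (gv \<gamma>) (Fr F p D0 - {p e}) else {})"
    if gp: "good_pred F p t" and ind: "indep (gv \<gamma>) (Fr F p D0)" for F p t
  proof (cases "e \<in> F")
    case True
    have pe: "p e \<in> In e" using gp True unfolding good_pred_def by auto
    have "p e \<in> Fr F p D0" using Fr_step(1)[OF gp dc0 eE eD0 InD True] by simp
    then have "gv \<gamma> (p e) \<notin> span (gv \<gamma>) (Fr F p D0 - {p e})"
      using indep_notin_span[OF finite_Fr[OF gp] ind] by blast
    moreover have "L (\<lambda>i. if i = p e then 1 else 0) = gv \<gamma> (p e)" unfolding L_def by (rule L_ind[OF pe])
    ultimately show ?thesis using True by simp
  next
    case False then show ?thesis by simp
  qed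
  obtain col where col: "L col \<notin> S1" "L col \<notin> S2"
    using two_avoid[of L S1 S2, OF Ladd cl1 cl2 av[OF gp1 ind1, folded S1_def] av[OF gp2 ind2, folded S2_def]]
    by blast
  define \<gamma>' where "\<gamma>' = (\<lambda>i x. if x = e then col i else \<gamma> i x)"
  have loc: "gv \<gamma>' it = gv \<gamma> it" if "it \<in> Done D0" for it
    by (rule locality[OF dc0 _ that]) (use eD0 in \<open>auto simp: \<gamma>'_def\<close>)
  have ge: "gv \<gamma>' (Inl e) = L col"
    unfolding gv_Inl L_def
  proof (rule sum.cong)
    fix i assume "i \<in> In e"
    then have "gv \<gamma>' i = gv \<gamma> i" using InD loc by blast
    then show "sc (\<gamma>' i e) (gv \<gamma>' i) = sc (col i) (gv \<gamma> i)" unfolding \<gamma>'_def by simp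
  qed simp
  have "indep (gv \<gamma>') (Fr F1 p1 (insert e D0))"
    by (rule extend_one[OF gp1 dc0 eE eD0 InD ind1 loc]) (use col ge S1_def in auto)
  moreover have "indep (gv \<gamma>') (Fr F2 p2 (insert e D0))"
    by (rule extend_one[OF gp2 dc0 eE eD0 InD ind2 loc]) (use col ge S2_def in auto)
  ultimately show ?case unfolding Dins by blast
qed

lemma Fr_final:
  assumes gp: "good_pred F p t" and nt: "\<And>e. e \<in> E \<Longrightarrow> tail e \<noteq> t"
  shows "Fr F p E = Inl ` {e\<in>F. head e = t}"
proof -
  have FE: "F \<subseteq> E" and pIn: "\<And>x. x \<in> F \<Longrightarrow> p x \<in> In x"
    and succ: "\<And>x. x \<in> F \<Longrightarrow> head x \<noteq> t \<Longrightarrow> \<exists>e''\<in>F. p e'' = Inl x"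
    using gp unfolding good_pred_def by auto
  show ?thesis
  proof (rule subset_antisym; rule subsetI)
    fix it :: "'e + nat" assume it: "it \<in> Fr F p E"
    then consider (a) x where "x \<in> F" "it = Inl x" | (b) x where "x \<in> F" "it = p x"
      unfolding Fr_def by auto
    then show "it \<in> Inl ` {e\<in>F. head e = t}"
    proof cases
      case a
      have "head x = t"
      proof (rule ccontr)
        assume "head x \<noteq> t"
        then obtain e'' where "e'' \<in> F" "p e'' = Inl x" using succ a(1) by blast
        then show False using it a FE unfolding Fr_def by auto
      qed
      then show ?thesis using a by auto
    next
      case b
      then show ?thesis using it FE unfolding Fr_def by auto
    qed
  next
    fix it :: "'e + nat" assume it: "it \<in> Inl ` {e\<in>F. head e = t}"
    then obtain x where x: "x \<in> F" "head x = t" "it = Inl x" by auto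
    have "p y \<noteq> Inl x" if "y \<in> F" for y
    proof
      assume "p y = Inl x"
      then have "Inl x \<in> In y" using pIn[OF that] by simp
      then have "y \<in> E" "head x = tail y" using Inl_In by auto
      then show False using nt x(2) by auto
    qed
    then show "it \<in> Fr F p E" unfolding Fr_def using x FE by auto
  qed
qed

end

lemma span_sc: "v \<in> span w A \<Longrightarrow> sc c v \<in> span w A"
  by (cases c) (simp_all add: sc_one sc_zero span_zero)

lemma projv_sc: "projv J (sc c v) = sc c (projv J v)"
  unfolding projv_def sc_def by (rule ext) simp

lemma indep_image:
  assumes "inj f" "indep w (f ` S)"
  shows "indep (\<lambda>x. w (f x)) S"
  unfolding indep_def
proof (intro allI impI)
  fix B assume B: "B \<subseteq> S" "B \<noteq> {}"
  have "sum (\<lambda>x. w (f x)) B = sum w (f ` B)"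
    using assms(1) by (simp add: sum.reindex inj_on_def)
  moreover have "f ` B \<subseteq> f ` S" "f ` B \<noteq> {}" using B by auto
  ultimately show "sum (\<lambda>x. w (f x)) B \<noteq> 0" using assms(2) unfolding indep_def by metis
qed

context net
begin

lemma pred_exists:
  assumes nt: "\<And>e. e \<in> E \<Longrightarrow> tail e \<noteq> t" and ts: "t \<noteq> s1" "t \<noteq> s2" and FE: "F \<subseteq> E"
    and cons: "\<And>v. v \<noteq> s1 \<Longrightarrow> v \<noteq> s2 \<Longrightarrow> v \<noteq> t \<Longrightarrow> card {e\<in>F. head e = v} = card {e\<in>F. tail e = v}"
    and c1: "card {e\<in>F. tail e = s1} \<le> R1" and c2: "card {e\<in>F. tail e = s2} \<le> R2"
  shows "\<exists>p. good_pred F p t"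
proof -
  have fF: "finite F" using FE finE finite_subset by blast
  define Ou where "Ou v = {e\<in>F. tail e = v}" for v
  define Iu where "Iu v = {e\<in>F. head e = v}" for v
  define \<phi> where "\<phi> v = (SOME f. bij_betw f (Ou v) (Iu v))" for v
  have phi: "bij_betw (\<phi> v) (Ou v) (Iu v)" if "v \<noteq> s1" "v \<noteq> s2" "v \<noteq> t" for v
  proof -
    have "\<exists>f. bij_betw f (Ou v) (Iu v)"
      using finite_same_card_bij[of "Ou v" "Iu v"] fF cons[OF that] unfolding Ou_def Iu_def by auto
    then show ?thesis unfolding \<phi>_def by (rule someI_ex)
  qed
  obtain \<sigma>1 where s1: "\<sigma>1 ` Ou s1 \<subseteq> {..<R1}" "inj_on \<sigma>1 (Ou s1)"
    using card_le_inj[of "Ou s1" "{..<R1}"] fF c1 unfolding Ou_def by auto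
  obtain \<sigma>2 where s2: "\<sigma>2 ` Ou s2 \<subseteq> {R1..<R1 + R2}" "inj_on \<sigma>2 (Ou s2)"
    using card_le_inj[of "Ou s2" "{R1..<R1 + R2}"] fF c2 unfolding Ou_def by auto
  define p where "p e = (if tail e = s1 then Inr (\<sigma>1 e) else if tail e = s2 then Inr (\<sigma>2 e)
      else Inl (\<phi> (tail e) e))" for e
  have dst: "s1 \<noteq> s2" using dist by simp
  have oth: "\<phi> (tail e) e \<in> F \<and> head (\<phi> (tail e) e) = tail e" if "e \<in> F" "tail e \<noteq> s1" "tail e \<noteq> s2" for e
  proof -
    have "tail e \<noteq> t" using nt that(1) FE by auto
    then have "\<phi> (tail e) e \<in> Iu (tail e)" using phi[of "tail e"] that unfolding bij_betw_def Ou_def by auto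
    then show ?thesis unfolding Iu_def by auto
  qed
  have "good_pred F p t"
    unfolding good_pred_def
  proof (intro conjI ballI allI impI)
    show "F \<subseteq> E" by fact
    fix e assume e: "e \<in> F"
    then have eE: "e \<in> E" using FE by auto
    show "p e \<in> In e"
    proof (cases "tail e = s1")
      case True then show ?thesis using s1 e eE unfolding p_def In_def Ou_def by auto
    next
      case False
      show ?thesis
      proof (cases "tail e = s2")
        case True then show ?thesis using s2 e eE False unfolding p_def In_def Ou_def by auto
      next
        case F2: False
        then show ?thesis using oth[OF e False F2] FE eE False unfolding p_def In_def by auto
      qed
    qed
  next
    show "inj_on p F"
    proof (rule inj_onI)
      fix a b assume a: "a \<in> F" and b: "b \<in> F" and ab: "p a = p b"
      consider "tail a = s1" | "tail a = s2" | "tail a \<noteq> s1" "tail a \<noteq> s2" by blast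
      then show "a = b"
      proof cases
        case 1
        have lt: "\<sigma>1 a < R1" using s1(1) a 1 unfolding Ou_def by auto
        have "tail b = s1"
        proof (rule ccontr)
          assume nb: "tail b \<noteq> s1"
          show False
          proof (cases "tail b = s2")
            case True
            have "R1 \<le> \<sigma>2 b" using s2(1) b True unfolding Ou_def by auto
            moreover have "\<sigma>1 a = \<sigma>2 b" using ab 1 nb True unfolding p_def by simp
            ultimately show False using lt by simp
          next
            case False then show False using ab 1 nb unfolding p_def by simp
          qed
        qed
        then show ?thesis using 1 ab s1(2) a b unfolding p_def Ou_def inj_on_def by (auto split: if_splits)
      next
        case 2
        have lt: "R1 \<le> \<sigma>2 a" using s2(1) a 2 unfolding Ou_def by auto
        have "tail b = s2"
        proof (rule ccontr)
          assume nb: "tail b \<noteq> s2"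
          show False
          proof (cases "tail b = s1")
            case True
            have "\<sigma>1 b < R1" using s1(1) b True unfolding Ou_def by auto
            moreover have "\<sigma>2 a = \<sigma>1 b" using ab 2 nb True dst unfolding p_def by simp
            ultimately show False using lt by simp
          next
            case False then show False using ab 2 nb dst unfolding p_def by simp
          qed
        qed
        then show ?thesis using 2 ab s2(2) a b dst unfolding p_def Ou_def inj_on_def by (auto split: if_splits)
      next
        case 3
        then have tb: "tail b \<noteq> s1" "tail b \<noteq> s2" using ab unfolding p_def by (auto split: if_splits)
        then have eq: "\<phi> (tail a) a = \<phi> (tail b) b" using ab 3 unfolding p_def by auto
        then have tt: "tail a = tail b" using oth[OF a 3] oth[OF b tb] by metis
        have "tail a \<noteq> t" using nt a FE by auto
        then have "inj_on (\<phi> (tail a)) (Ou (tail a))" using phi[of "tail a"] 3 unfolding bij_betw_def by auto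
        then show ?thesis using eq tt a b unfolding Ou_def inj_on_def by auto
      qed
    qed
  next
    fix e e' assume e: "e \<in> F" and pe: "p e = Inl e'"
    then have "tail e \<noteq> s1" "tail e \<noteq> s2" unfolding p_def by (auto split: if_splits)
    then show "e' \<in> F" using oth[OF e] pe unfolding p_def by auto
  next
    fix e assume e: "e \<in> F" and he: "head e \<noteq> t"
    let ?v = "head e"
    have vs: "?v \<noteq> s1" "?v \<noteq> s2" using ends e FE by auto
    then have "e \<in> Iu ?v" using e unfolding Iu_def by auto
    then obtain e'' where e'': "e'' \<in> Ou ?v" "\<phi> ?v e'' = e"
      using phi[OF vs he] unfolding bij_betw_def by (metis imageE)
    then have "e'' \<in> F" "tail e'' = ?v" unfolding Ou_def by auto
    then show "\<exists>e''\<in>F. p e'' = Inl e" using e'' vs unfolding p_def by (intro bexI[of _ e'']) auto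
  qed
  then show ?thesis by blast
qed

lemma gv_supp: "e \<in> E \<Longrightarrow> R1 + R2 \<le> k \<Longrightarrow> gv \<gamma> (Inl e) k = 0"
proof (induction "Inl e :: 'e + nat" arbitrary: e rule: wf_induct_rule[OF wfRel])
  case 1
  have "gv \<gamma> (Inl e) k = (\<Sum>i\<in>In e. sc (\<gamma> i e) (gv \<gamma> i) k)"
    unfolding gv_Inl by (rule sum_fun_apply)
  also have "\<dots> = 0"
  proof (rule sum.neutral, rule ballI)
    fix i assume i: "i \<in> In e"
    have "gv \<gamma> i k = 0"
    proof (cases i)
      case (Inl e')
      then have "(i, Inl e) \<in> Rel" "e' \<in> E" using i Inl_In unfolding Rel_def by auto
      then show ?thesis using 1 Inl by blast
    next
      case (Inr c)
      then have "c < R1 + R2" using i unfolding In_def by (auto split: if_splits)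
      then show ?thesis using Inr 1(3) by (auto simp: gv_Inr unitv_def)
    qed
    then show "sc (\<gamma> i e) (gv \<gamma> i) k = 0" unfolding sc_def by simp
  qed
  finally show ?case .
qed

lemma cut_span:
  assumes C: "is_cut E tail head {sx} {t} C" and sxs: "sx = s1 \<or> sx = s2"
    and so: "so = s1 \<or> so = s2" "so \<noteq> sx"
    and oJ: "\<forall>e c. e \<in> E \<and> tail e = so \<and> Inr c \<in> In e \<longrightarrow> c \<notin> Jx"
    and f: "f \<in> E" "head f = t"
  shows "projv Jx (gv \<gamma> (Inl f)) \<in> span (\<lambda>e. projv Jx (gv \<gamma> (Inl e))) C"
proof -
  define W where "W e = projv Jx (gv \<gamma> (Inl e))" for e
  define Reach where "Reach = {v. (sx, v) \<in> (edge_rel (E - C) tail head)\<^sup>*}"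
  have fC: "finite C" using C finE finite_subset unfolding is_cut_def by blast
  have sxR: "sx \<in> Reach" unfolding Reach_def by simp
  have tR: "t \<notin> Reach" using C unfolding Reach_def is_cut_def by auto
  have reachstep: "head e \<in> Reach" if "e \<in> E" "e \<notin> C" "tail e \<in> Reach" for e
  proof -
    have "(tail e, head e) \<in> edge_rel (E - C) tail head" unfolding edge_rel_def using that by auto
    then show ?thesis using that(3) unfolding Reach_def by (simp add: rtrancl.rtrancl_into_rtrancl)
  qed
  have main: "e \<in> E \<Longrightarrow> e \<notin> C \<Longrightarrow> tail e \<notin> Reach \<Longrightarrow> W e \<in> span W C" for e
  proof (induction "Inl e :: 'e + nat" arbitrary: e rule: wf_induct_rule[OF wfRel])
    case 1
    have "W e = (\<Sum>i\<in>In e. sc (\<gamma> i e) (projv Jx (gv \<gamma> i)))"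
      unfolding W_def gv_Inl projv_sum projv_sc ..
    also have "\<dots> \<in> span W C"
    proof (rule span_sum[OF fC finite_In])
      fix i assume i: "i \<in> In e"
      show "sc (\<gamma> i e) (projv Jx (gv \<gamma> i)) \<in> span W C"
      proof (rule span_sc, cases i)
        case (Inl e')
        then have e': "e' \<in> E" "head e' = tail e" and rel: "(i, Inl e) \<in> Rel"
          using i Inl_In unfolding Rel_def by auto
        show "projv Jx (gv \<gamma> i) \<in> span W C"
        proof (cases "e' \<in> C")
          case True then show ?thesis using Inl span_elem[of e' C W] unfolding W_def by simp
        next
          case False
          then have "tail e' \<notin> Reach" using reachstep[OF e'(1) False] e'(2) 1(4) by auto
          then show ?thesis using 1(1)[OF rel[unfolded Inl] e'(1) False] Inl unfolding W_def by simp
        qed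
      next
        case (Inr c)
        have "tail e = s1 \<or> tail e = s2" using i Inr unfolding In_def by (auto split: if_splits)
        moreover have "tail e \<noteq> sx" using 1(4) sxR by auto
        ultimately have "tail e = so" using sxs so by auto
        then have "c \<notin> Jx" using oJ 1(2) i Inr by blast
        then have "projv Jx (unitv c) = 0" by (intro ext) (simp add: projv_def unitv_def)
        then have "projv Jx (gv \<gamma> i) = 0" unfolding Inr gv_Inr .
        then show "projv Jx (gv \<gamma> i) \<in> span W C" by (simp add: span_zero)
      qed
    qed
    finally show ?case .
  qed
  show ?thesis
  proof (cases "f \<in> C")
    case True then show ?thesis using span_elem[of f C W] unfolding W_def by simp
  next
    case False
    then have "tail f \<notin> Reach" using reachstep[OF f(1) False] f(2) tR by auto
    then show ?thesis using main[OF f(1) False] unfolding W_def by simp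
  qed
qed

lemma decode_terminal:
  assumes gp: "good_pred F p t" and nt: "\<And>e. e \<in> E \<Longrightarrow> tail e \<noteq> t"
    and ind: "indep (gv \<gamma>) (Fr F p E)"
    and C: "is_cut E tail head {sx} {t} C" and sxs: "sx = s1 \<or> sx = s2"
    and so: "so = s1 \<or> so = s2" "so \<noteq> sx"
    and oJ: "\<forall>e c. e \<in> E \<and> tail e = so \<and> Inr c \<in> In e \<longrightarrow> c \<notin> Jx"
    and fJ: "finite Jo" "finite Jx" and cov: "\<And>k. k < R1 + R2 \<Longrightarrow> k \<in> Jo \<or> k \<in> Jx"
    and cardF: "card Jo + min (card Jx) (card C) \<le> card {e\<in>F. head e = t}"
    and j: "j \<in> Jo"
  shows "unitv j \<in> span (\<lambda>e. gv \<gamma> (Inl e)) {e\<in>E. head e = t}"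
proof -
  define w where "w e = gv \<gamma> (Inl e)" for e
  define T where "T = {e\<in>E. head e = t}"
  define S where "S = {e\<in>F. head e = t}"
  have FE: "F \<subseteq> E" using gp unfolding good_pred_def by simp
  have fC: "finite C" using C finE finite_subset unfolding is_cut_def by blast
  have fT: "finite T" unfolding T_def using finE by simp
  have ST: "S \<subseteq> T" unfolding S_def T_def using FE by auto
  have indS: "indep w S"
    unfolding w_def S_def using indep_image[of Inl "gv \<gamma>"] ind Fr_final[OF gp nt] by (simp add: inj_def)
  have supp: "w f k = 0" if "f \<in> T" "k \<notin> Jo" "k \<notin> Jx" for f k
  proof -
    have "R1 + R2 \<le> k" using cov[of k] that(2,3) by linarith
    then show ?thesis unfolding w_def using gv_supp that(1) unfolding T_def by auto
  qed
  define P where "P = projv Jx ` span w T"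
  have P1: "P \<subseteq> span (\<lambda>e. projv Jx (gv \<gamma> (Inl e))) C"
  proof
    fix x assume "x \<in> P"
    then obtain B where B: "B \<subseteq> T" "x = projv Jx (sum w B)" unfolding P_def span_def by blast
    have "x = (\<Sum>f\<in>B. projv Jx (w f))" unfolding B(2) projv_sum ..
    also have "\<dots> \<in> span (\<lambda>e. projv Jx (gv \<gamma> (Inl e))) C"
    proof (rule span_sum[OF fC])
      show "finite B" using B(1) fT finite_subset by blast
      fix f assume "f \<in> B"
      then have "f \<in> E" "head f = t" using B(1) unfolding T_def by auto
      then show "projv Jx (w f) \<in> span (\<lambda>e. projv Jx (gv \<gamma> (Inl e))) C"
        unfolding w_def by (rule cut_span[OF C sxs so oJ])
    qed
    finally show "x \<in> span (\<lambda>e. projv Jx (gv \<gamma> (Inl e))) C" .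
  qed
  have P2: "P \<subseteq> span unitv Jx"
  proof
    fix x assume "x \<in> P"
    then obtain u where "x = projv Jx u" unfolding P_def by blast
    then show "x \<in> span unitv Jx" using fJ(2) by (intro support_in_span) (auto simp: projv_def)
  qed
  have c1: "card P \<le> 2 ^ card C"
    using card_mono[OF finite_span[OF fC] P1] card_span_le[OF fC, of "\<lambda>e. projv Jx (gv \<gamma> (Inl e))"] by linarith
  have c2: "card P \<le> 2 ^ card Jx"
    using card_mono[OF finite_span[OF fJ(2)] P2] card_span_le[OF fJ(2), of unitv] by linarith
  have proj: "card P \<le> 2 ^ min (card Jx) (card C)"
    using c1 c2 by (cases "card Jx \<le> card C") (simp_all add: min_def)
  show ?thesis
    using key_count[OF fT ST indS fJ(1) supp proj[unfolded P_def] cardF[folded S_def] j]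
    unfolding w_def T_def by simp
qed

end

definition K2 :: "nat ring" where
  "K2 = \<lparr>carrier = {0, 1}, mult = (\<lambda>a b. a * b), one = 1, zero = 0, add = (\<lambda>a b. (a + b) mod 2)\<rparr>"

lemma K2_simps: "carrier K2 = {0, 1}" "a \<otimes>\<^bsub>K2\<^esub> b = a * b" "\<one>\<^bsub>K2\<^esub> = 1" "\<zero>\<^bsub>K2\<^esub> = 0"
  "a \<oplus>\<^bsub>K2\<^esub> b = (a + b) mod 2"
  by (simp_all add: K2_def)

lemma K2_cring: "cring K2"
proof (rule cringI)
  show "abelian_group K2"
    by (rule abelian_groupI) (auto simp: K2_simps)
  show "comm_monoid K2"
    by (rule comm_monoidI) (auto simp: K2_simps)
  fix x y z assume "x \<in> carrier K2" "y \<in> carrier K2" "z \<in> carrier K2"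
  then show "(x \<oplus>\<^bsub>K2\<^esub> y) \<otimes>\<^bsub>K2\<^esub> z = x \<otimes>\<^bsub>K2\<^esub> z \<oplus>\<^bsub>K2\<^esub> y \<otimes>\<^bsub>K2\<^esub> z"
    by (auto simp: K2_simps)
qed

lemma K2_field: "field K2"
  by (rule cring.cring_fieldI2[OF K2_cring]) (auto simp: K2_simps)

definition b2n :: "bit \<Rightarrow> nat" where "b2n b = (if b = 1 then 1 else 0)"
definition n2b :: "nat \<Rightarrow> bit" where "n2b n = (if n = 1 then 1 else 0)"

lemma n2b_b2n[simp]: "n2b (b2n b) = b"
  by (cases b) (simp_all add: n2b_def b2n_def)

lemma b2n_n2b: "n \<in> {0, 1} \<Longrightarrow> b2n (n2b n) = n"
  by (auto simp: n2b_def b2n_def)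

lemma b2n_01: "b2n b \<in> {0, 1}" by (simp add: b2n_def)

lemma n2b_mult: "x \<in> {0, 1} \<Longrightarrow> n2b (b2n a * x) = a * n2b x"
  by (cases a) (auto simp: n2b_def b2n_def)

lemma n2b_inj: "x \<in> {0, 1} \<Longrightarrow> y \<in> {0, 1} \<Longrightarrow> n2b x = n2b y \<Longrightarrow> x = y"
  by (auto simp: n2b_def)

lemma finsum_K2:
  assumes "finite A" "\<And>a. a \<in> A \<Longrightarrow> f a \<in> {0, 1}"
  shows "finsum K2 f A = b2n (\<Sum>a\<in>A. n2b (f a))"
  using assms
proof (induction A rule: finite_induct)
  case empty
  interpret K: cring K2 by (rule K2_cring)
  show ?case by (simp add: K2_simps b2n_def)
next
  case (insert x F)
  interpret K: cring K2 by (rule K2_cring)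
  have "finsum K2 f (insert x F) = f x \<oplus>\<^bsub>K2\<^esub> finsum K2 f F"
    using insert by (intro K.finsum_insert) (auto simp: K2_simps)
  also have "\<dots> = (f x + b2n (\<Sum>a\<in>F. n2b (f a))) mod 2" using insert by (simp add: K2_simps)
  also have "\<dots> = b2n (n2b (f x) + (\<Sum>a\<in>F. n2b (f a)))"
    using insert.prems[of x] by (cases "\<Sum>a\<in>F. n2b (f a)") (auto simp: b2n_def n2b_def)
  also have "\<dots> = b2n (\<Sum>a\<in>insert x F. n2b (f a))" using insert by simp
  finally show ?case .
qed

lemma sum_Inr: "sum g (Inr ` A) = (\<Sum>j\<in>A. g (Inr j))"
proof -
  have "sum g (Inr ` A) = sum (g \<circ> Inr) A" by (rule sum.reindex) (simp add: inj_on_def)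
  then show ?thesis unfolding comp_def .
qed

lemma sum_Inl: "sum g (Inl ` A) = (\<Sum>j\<in>A. g (Inl j))"
proof -
  have "sum g (Inl ` A) = sum (g \<circ> Inl) A" by (rule sum.reindex) (simp add: inj_on_def)
  then show ?thesis unfolding comp_def .
qed

lemma sum_shift_R: "(\<Sum>k\<in>{a..<a + b}. f k) = (\<Sum>j<b. f (a + j :: nat))"
proof -
  have "(\<Sum>k\<in>{0 + a..<b + a}. f k) = (\<Sum>j\<in>{0..<b}. f (j + a))" by (rule sum.shift_bounds_nat_ivl)
  then show ?thesis by (simp add: add.commute atLeast0LessThan)
qed

context net
begin

definition zv :: "(nat \<Rightarrow> nat) \<Rightarrow> (nat \<Rightarrow> nat) \<Rightarrow> vec" where
  "zv x1 x2 k = (if k < R1 then n2b (x1 k) else if k < R1 + R2 then n2b (x2 (k - R1)) else 0)"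

definition ip :: "vec \<Rightarrow> vec \<Rightarrow> bit" where "ip v z = (\<Sum>k<R1 + R2. v k * z k)"

lemma ip_sum: "ip (sum f A) z = (\<Sum>a\<in>A. ip (f a) z)"
  unfolding ip_def sum_fun_apply sum_distrib_right by (rule sum.swap)

lemma ip_sc: "ip (sc c v) z = c * ip v z"
  unfolding ip_def sc_def sum_distrib_left by (simp only: mult.assoc)

lemma ip_unit:
  assumes "c < R1 + R2" shows "ip (unitv c) z = z c"
proof -
  have e: "unitv c k * z k = (if k = c then z k else 0)" for k
    unfolding unitv_def by (cases "k = c") (simp_all only: if_True if_False mult_1_left mult_zero_left simp_thms)
  show ?thesis unfolding ip_def e using assms by (subst sum.delta) auto
qed

lemma ip_add: "ip v (z + z') = ip v z + ip v z'"
  unfolding ip_def plus_fun_apply distrib_left sum.distrib ..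

definition \<alpha>c :: "(('e + nat) \<Rightarrow> 'e \<Rightarrow> bit) \<Rightarrow> 'e \<Rightarrow> nat \<Rightarrow> nat" where
  "\<alpha>c \<gamma> e j = b2n (if tail e = s1 then \<gamma> (Inr j) e else \<gamma> (Inr (R1 + j)) e)"
definition \<beta>c :: "(('e + nat) \<Rightarrow> 'e \<Rightarrow> bit) \<Rightarrow> 'e \<Rightarrow> 'e \<Rightarrow> nat" where
  "\<beta>c \<gamma> e' e = b2n (\<gamma> (Inl e') e)"

lemma y_eval:
  assumes x1: "\<And>j. j < R1 \<Longrightarrow> x1 j \<in> {0, 1}" and x2: "\<And>j. j < R2 \<Longrightarrow> x2 j \<in> {0, 1}"
    and cs: "code_edge_symbols K2 E tail head s1 s2 R1 R2 (\<alpha>c \<gamma>) (\<beta>c \<gamma>) x1 x2 y"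
  shows "e \<in> E \<Longrightarrow> n2b (y e) = ip (gv \<gamma> (Inl e)) (zv x1 x2)"
proof (induction "Inl e :: 'e + nat" arbitrary: e rule: wf_induct_rule[OF wfRel])
  case 1
  define z where "z = zv x1 x2"
  have ycar: "y e' \<in> {0, 1}" if "e' \<in> E" for e'
    using cs that unfolding code_edge_symbols_def by (auto simp: K2_simps)
  have eq: "y e = (if tail e = s1 then finsum K2 (\<lambda>j. \<alpha>c \<gamma> e j \<otimes>\<^bsub>K2\<^esub> x1 j) {..<R1}
         else if tail e = s2 then finsum K2 (\<lambda>j. \<alpha>c \<gamma> e j \<otimes>\<^bsub>K2\<^esub> x2 j) {..<R2}
         else finsum K2 (\<lambda>e'. \<beta>c \<gamma> e' e \<otimes>\<^bsub>K2\<^esub> y e') {e' \<in> E. head e' = tail e})"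
    using cs 1(2) unfolding code_edge_symbols_def by (auto split: if_splits)
  have rhs: "ip (gv \<gamma> (Inl e)) z = (\<Sum>i\<in>In e. \<gamma> i e * ip (gv \<gamma> i) z)"
    unfolding gv_Inl ip_sum ip_sc ..
  have m01: "a * b \<in> {0, 1}" if "a \<in> {0, 1}" "b \<in> {0, 1}" for a b :: nat using that by auto
  consider (a) "tail e = s1" | (b) "tail e \<noteq> s1" "tail e = s2" | (c) "tail e \<noteq> s1" "tail e \<noteq> s2" by blast
  then show ?case
  proof cases
    case a
    have "y e = finsum K2 (\<lambda>j. \<alpha>c \<gamma> e j * x1 j) {..<R1}"
      using eq a unfolding K2_simps(2) by simp
    also have "\<dots> = b2n (\<Sum>j<R1. n2b (\<alpha>c \<gamma> e j * x1 j))"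
      unfolding \<alpha>c_def by (rule finsum_K2) (simp, rule m01[OF b2n_01 x1], simp)
    finally have "n2b (y e) = (\<Sum>j<R1. n2b (\<alpha>c \<gamma> e j * x1 j))" by (simp only: n2b_b2n)
    also have "\<dots> = (\<Sum>j<R1. \<gamma> (Inr j) e * z j)"
    proof (rule sum.cong)
      fix j assume j: "j \<in> {..<R1}"
      have "\<alpha>c \<gamma> e j = b2n (\<gamma> (Inr j) e)" unfolding \<alpha>c_def using a by simp
      moreover have "z j = n2b (x1 j)" unfolding z_def zv_def using j by simp
      ultimately show "n2b (\<alpha>c \<gamma> e j * x1 j) = \<gamma> (Inr j) e * z j" using n2b_mult x1 j by simp
    qed simp
    also have "\<dots> = (\<Sum>i\<in>Inr ` {..<R1}. \<gamma> i e * ip (gv \<gamma> i) z)"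
    proof -
      have "(\<Sum>i\<in>Inr ` {..<R1}. \<gamma> i e * ip (gv \<gamma> i) z) = (\<Sum>j<R1. \<gamma> (Inr j) e * ip (gv \<gamma> (Inr j)) z)"
        by (rule sum_Inr)
      also have "\<dots> = (\<Sum>j<R1. \<gamma> (Inr j) e * z j)"
        by (rule sum.cong) (simp_all add: gv_Inr ip_unit)
      finally show ?thesis by simp
    qed
    also have "Inr ` {..<R1} = In e" unfolding In_def using 1(2) a by simp
    finally show ?thesis using rhs z_def by simp
  next
    case b
    have "y e = finsum K2 (\<lambda>j. \<alpha>c \<gamma> e j * x2 j) {..<R2}"
      using eq b unfolding K2_simps(2) by simp
    also have "\<dots> = b2n (\<Sum>j<R2. n2b (\<alpha>c \<gamma> e j * x2 j))"
      unfolding \<alpha>c_def by (rule finsum_K2) (simp, rule m01[OF b2n_01 x2], simp)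
    finally have "n2b (y e) = (\<Sum>j<R2. n2b (\<alpha>c \<gamma> e j * x2 j))" by (simp only: n2b_b2n)
    also have "\<dots> = (\<Sum>j<R2. \<gamma> (Inr (R1 + j)) e * z (R1 + j))"
    proof (rule sum.cong)
      fix j assume j: "j \<in> {..<R2}"
      have "\<alpha>c \<gamma> e j = b2n (\<gamma> (Inr (R1 + j)) e)" unfolding \<alpha>c_def using b by simp
      moreover have "z (R1 + j) = n2b (x2 j)" unfolding z_def zv_def using j by simp
      ultimately show "n2b (\<alpha>c \<gamma> e j * x2 j) = \<gamma> (Inr (R1 + j)) e * z (R1 + j)" using n2b_mult x2 j by simp
    qed simp
    also have "\<dots> = (\<Sum>k\<in>{R1..<R1 + R2}. \<gamma> (Inr k) e * z k)" by (rule sum_shift_R[symmetric])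
    also have "\<dots> = (\<Sum>i\<in>Inr ` {R1..<R1 + R2}. \<gamma> i e * ip (gv \<gamma> i) z)"
    proof -
      have "(\<Sum>i\<in>Inr ` {R1..<R1 + R2}. \<gamma> i e * ip (gv \<gamma> i) z) = (\<Sum>k\<in>{R1..<R1 + R2}. \<gamma> (Inr k) e * ip (gv \<gamma> (Inr k)) z)"
        by (rule sum_Inr)
      also have "\<dots> = (\<Sum>k\<in>{R1..<R1 + R2}. \<gamma> (Inr k) e * z k)"
        by (rule sum.cong) (simp_all add: gv_Inr ip_unit)
      finally show ?thesis by simp
    qed
    also have "Inr ` {R1..<R1 + R2} = In e" unfolding In_def using 1(2) b by simp
    finally show ?thesis using rhs z_def by simp
  next
    case c
    have fin: "finite {e' \<in> E. head e' = tail e}" using finE by simp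
    have "y e = finsum K2 (\<lambda>e'. \<beta>c \<gamma> e' e * y e') {e' \<in> E. head e' = tail e}"
      using eq c unfolding K2_simps(2) by simp
    also have "\<dots> = b2n (\<Sum>e'\<in>{e' \<in> E. head e' = tail e}. n2b (\<beta>c \<gamma> e' e * y e'))"
      unfolding \<beta>c_def by (rule finsum_K2[OF fin]) (rule m01[OF b2n_01 ycar], simp)
    finally have "n2b (y e) = (\<Sum>e'\<in>{e' \<in> E. head e' = tail e}. n2b (\<beta>c \<gamma> e' e * y e'))"
      by (simp only: n2b_b2n)
    also have "\<dots> = (\<Sum>e'\<in>{e' \<in> E. head e' = tail e}. \<gamma> (Inl e') e * ip (gv \<gamma> (Inl e')) z)"
    proof (rule sum.cong)
      fix e' assume e': "e' \<in> {e' \<in> E. head e' = tail e}"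
      then have "(Inl e', Inl e) \<in> Rel" using 1(2) c unfolding Rel_def In_def by auto
      then have "n2b (y e') = ip (gv \<gamma> (Inl e')) (zv x1 x2)" using 1(1) e' by blast
      moreover have "n2b (\<beta>c \<gamma> e' e * y e') = \<gamma> (Inl e') e * n2b (y e')"
        unfolding \<beta>c_def using n2b_mult ycar e' by simp
      ultimately show "n2b (\<beta>c \<gamma> e' e * y e') = \<gamma> (Inl e') e * ip (gv \<gamma> (Inl e')) z"
        unfolding z_def by simp
    qed simp
    also have "\<dots> = (\<Sum>i\<in>Inl ` {e' \<in> E. head e' = tail e}. \<gamma> i e * ip (gv \<gamma> i) z)"
      by (rule sum_Inl[symmetric])
    also have "Inl ` {e' \<in> E. head e' = tail e} = In e" unfolding In_def using 1(2) c by simp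
    finally show ?thesis using rhs z_def by simp
  qed
qed

lemma decode_final:
  assumes agree: "\<And>f. f \<in> T \<Longrightarrow> ip (w f) z = ip (w f) z'"
    and fT: "finite T" and u: "unitv j \<in> span w T" and j: "j < R1 + R2"
  shows "z j = z' j"
proof -
  obtain B where B: "B \<subseteq> T" "unitv j = sum w B" using u unfolding span_def by blast
  have "ip (unitv j) (z + z') = (\<Sum>f\<in>B. ip (w f) (z + z'))" unfolding B(2) ip_sum ..
  also have "\<dots> = 0"
  proof (rule sum.neutral, rule ballI)
    fix f assume "f \<in> B"
    then have "ip (w f) z = ip (w f) z'" using agree B(1) by blast
    then show "ip (w f) (z + z') = 0" unfolding ip_add by simp
  qed
  finally have "z j + z' j = 0" using ip_unit[OF j, of "z + z'"] by simp
  then show ?thesis by (rule bit_add_eq0)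
qed

end

theorem theorem2:
  fixes E :: "'e set" and tail head :: "'e \<Rightarrow> 'v" and s1 s2 t1 t2 :: 'v and R1 R2 :: nat
  assumes "two_unicast_net E tail head s1 s2 t1 t2"
    and "mincut E tail head {s1} {t2} + mincut E tail head {s2} {t1}
           \<le> min (mincut E tail head {s1, s2} {t1}) (mincut E tail head {s1, s2} {t2})"
    and "R1 \<le> mincut E tail head {s1, s2} {t1} - mincut E tail head {s2} {t1}"
    and "R2 \<le> mincut E tail head {s1, s2} {t2} - mincut E tail head {s1} {t2}"
  shows "achievable E tail head s1 s2 t1 t2 R1 R2"
proof -
  have finE: "finite E" and acyc: "acyclic (edge_rel E tail head)" and dist: "distinct [s1, s2, t1, t2]"
    and ends: "\<And>e. e \<in> E \<Longrightarrow> head e \<noteq> s1 \<and> head e \<noteq> s2 \<and> tail e \<noteq> t1 \<and> tail e \<noteq> t2"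
    using assms(1) unfolding two_unicast_net_def by auto
  interpret net E tail head s1 s2 t1 t2 R1 R2
    using finE acyc dist ends by unfold_locales auto
  have d: "s1 \<noteq> s2" "s1 \<noteq> t1" "s1 \<noteq> t2" "s2 \<noteq> t1" "s2 \<noteq> t2" "t1 \<noteq> t2" using dist by auto
  interpret f1: flownet E tail head s1 s2 t1 R1 R2
    using finE d ends by unfold_locales auto
  interpret f2: flownet E tail head s1 s2 t2 R1 R2
    using finE d ends by unfold_locales auto
  define a11 where "a11 = mincut E tail head {s1} {t1}"
  define a21 where "a21 = mincut E tail head {s2} {t1}"
  define a121 where "a121 = mincut E tail head {s1, s2} {t1}"
  define a12 where "a12 = mincut E tail head {s1} {t2}"
  define a22 where "a22 = mincut E tail head {s2} {t2}"
  define a122 where "a122 = mincut E tail head {s1, s2} {t2}"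
  obtain F1 where F1: "f1.isflow F1" "min (min (R1 + R2) (R1 + a21)) (min (R2 + a11) a121) \<le> f1.inF F1 t1"
    using f1.maxflow unfolding a11_def a21_def a121_def by blast
  obtain F2 where F2: "f2.isflow F2" "min (min (R1 + R2) (R1 + a22)) (min (R2 + a12) a122) \<le> f2.inF F2 t2"
    using f2.maxflow unfolding a12_def a22_def a122_def by blast
  have u1: "a121 \<le> a11 + a21" unfolding a121_def a11_def a21_def using d by (intro mincut_union[OF finE]) auto
  have u2: "a122 \<le> a12 + a22" unfolding a122_def a12_def a22_def using d by (intro mincut_union[OF finE]) auto
  have m1: "a21 \<le> a121" unfolding a121_def a21_def using d by (intro mincut_sub[OF finE]) auto
  have m2: "a12 \<le> a122" unfolding a122_def a12_def using d by (intro mincut_sub[OF finE]) auto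
  have r1: "R1 \<le> a121 - a21" using assms(3) unfolding a121_def a21_def .
  have r2: "R2 \<le> a122 - a12" using assms(4) unfolding a122_def a12_def .
  have v1: "R1 + min R2 a21 \<le> f1.inF F1 t1" using F1(2) u1 m1 r1 by (simp add: min_def split: if_splits)
  have v2: "R2 + min R1 a12 \<le> f2.inF F2 t2" using F2(2) u2 m2 r2 by (simp add: min_def split: if_splits)
  obtain p1 where gp1: "good_pred F1 p1 t1"
  proof -
    have "\<exists>p. good_pred F1 p t1"
    proof (rule pred_exists)
      show "\<And>e. e \<in> E \<Longrightarrow> tail e \<noteq> t1" using ends by auto
      show "t1 \<noteq> s1" "t1 \<noteq> s2" using d by auto
      show "F1 \<subseteq> E" using F1(1) unfolding f1.isflow_def by simp
      show "\<And>v. v \<noteq> s1 \<Longrightarrow> v \<noteq> s2 \<Longrightarrow> v \<noteq> t1 \<Longrightarrow> card {e\<in>F1. head e = v} = card {e\<in>F1. tail e = v}"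
        using F1(1) unfolding f1.isflow_def f1.inF_def f1.outF_def by auto
      show "card {e\<in>F1. tail e = s1} \<le> R1" "card {e\<in>F1. tail e = s2} \<le> R2"
        using F1(1) d unfolding f1.isflow_def f1.outF_def f1.cap_def by auto
    qed
    then show ?thesis using that by blast
  qed
  obtain p2 where gp2: "good_pred F2 p2 t2"
  proof -
    have "\<exists>p. good_pred F2 p t2"
    proof (rule pred_exists)
      show "\<And>e. e \<in> E \<Longrightarrow> tail e \<noteq> t2" using ends by auto
      show "t2 \<noteq> s1" "t2 \<noteq> s2" using d by auto
      show "F2 \<subseteq> E" using F2(1) unfolding f2.isflow_def by simp
      show "\<And>v. v \<noteq> s1 \<Longrightarrow> v \<noteq> s2 \<Longrightarrow> v \<noteq> t2 \<Longrightarrow> card {e\<in>F2. head e = v} = card {e\<in>F2. tail e = v}"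
        using F2(1) unfolding f2.isflow_def f2.inF_def f2.outF_def by auto
      show "card {e\<in>F2. tail e = s1} \<le> R1" "card {e\<in>F2. tail e = s2} \<le> R2"
        using F2(1) d unfolding f2.isflow_def f2.outF_def f2.cap_def by auto
    qed
    then show ?thesis using that by blast
  qed
  have dcE: "dc E" unfolding dc_def using Inl_In by blast
  obtain \<gamma> where ind1: "indep (gv \<gamma>) (Fr F1 p1 E)" and ind2: "indep (gv \<gamma>) (Fr F2 p2 E)"
    using greedy[OF gp1 gp2 dcE refl] by blast
  obtain C21 where C21: "is_cut E tail head {s2} {t1} C21" "card C21 = a21"
    using mincut_attained[OF finE, of "{s2}" "{t1}" tail head] d unfolding a21_def by auto
  obtain C12 where C12: "is_cut E tail head {s1} {t2} C12" "card C12 = a12"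
    using mincut_attained[OF finE, of "{s1}" "{t2}" tail head] d unfolding a12_def by auto
  have U1: "unitv j \<in> span (\<lambda>e. gv \<gamma> (Inl e)) {e\<in>E. head e = t1}" if j: "j < R1" for j
  proof (rule decode_terminal[OF gp1 _ ind1 C21(1)])
    show "\<And>e. e \<in> E \<Longrightarrow> tail e \<noteq> t1" using ends by auto
    show "s2 = s1 \<or> s2 = s2" "s1 = s1 \<or> s1 = s2" "s1 \<noteq> s2" using d by auto
    show "\<forall>e c. e \<in> E \<and> tail e = s1 \<and> Inr c \<in> In e \<longrightarrow> c \<notin> {R1..<R1 + R2}"
      unfolding In_def by auto
    show "finite {..<R1}" "finite {R1..<R1 + R2}" by auto
    show "\<And>k. k < R1 + R2 \<Longrightarrow> k \<in> {..<R1} \<or> k \<in> {R1..<R1 + R2}" by auto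
    show "card {..<R1} + min (card {R1..<R1 + R2}) (card C21) \<le> card {e\<in>F1. head e = t1}"
      using v1 C21(2) unfolding f1.inF_def by simp
    show "j \<in> {..<R1}" using j by simp
  qed
  have U2: "unitv (R1 + j) \<in> span (\<lambda>e. gv \<gamma> (Inl e)) {e\<in>E. head e = t2}" if j: "j < R2" for j
  proof (rule decode_terminal[OF gp2 _ ind2 C12(1)])
    show "\<And>e. e \<in> E \<Longrightarrow> tail e \<noteq> t2" using ends by auto
    show "s1 = s1 \<or> s1 = s2" "s2 = s1 \<or> s2 = s2" "s2 \<noteq> s1" using d by auto
    show "\<forall>e c. e \<in> E \<and> tail e = s2 \<and> Inr c \<in> In e \<longrightarrow> c \<notin> {..<R1}"
      unfolding In_def using d by auto
    show "finite {R1..<R1 + R2}" "finite {..<R1}" by auto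
    show "\<And>k. k < R1 + R2 \<Longrightarrow> k \<in> {R1..<R1 + R2} \<or> k \<in> {..<R1}" by auto
    show "card {R1..<R1 + R2} + min (card {..<R1}) (card C12) \<le> card {e\<in>F2. head e = t2}"
      using v2 C12(2) unfolding f2.inF_def by simp
    show "R1 + j \<in> {R1..<R1 + R2}" using j by simp
  qed
  have finT: "finite {e\<in>E. head e = t}" for t using finE by simp
  have "linear_solution K2 E tail head s1 s2 t1 t2 R1 R2"
    unfolding linear_solution_def
  proof (intro exI[of _ "\<alpha>c \<gamma>"] exI[of _ "\<beta>c \<gamma>"] conjI)
    show "\<forall>e\<in>E. \<forall>j. \<alpha>c \<gamma> e j \<in> carrier K2" unfolding \<alpha>c_def K2_simps using b2n_01 by blast
    show "\<forall>e'\<in>E. \<forall>e\<in>E. \<beta>c \<gamma> e' e \<in> carrier K2" unfolding \<beta>c_def K2_simps using b2n_01 by blast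
    show "\<forall>x1 x2 y x1' x2' y'.
          x1 \<in> {..<R1} \<rightarrow> carrier K2 \<and> x2 \<in> {..<R2} \<rightarrow> carrier K2 \<and>
          x1' \<in> {..<R1} \<rightarrow> carrier K2 \<and> x2' \<in> {..<R2} \<rightarrow> carrier K2 \<and>
          code_edge_symbols K2 E tail head s1 s2 R1 R2 (\<alpha>c \<gamma>) (\<beta>c \<gamma>) x1 x2 y \<and>
          code_edge_symbols K2 E tail head s1 s2 R1 R2 (\<alpha>c \<gamma>) (\<beta>c \<gamma>) x1' x2' y' \<longrightarrow>
            ((\<forall>e\<in>E. head e = t1 \<longrightarrow> y e = y' e) \<longrightarrow> (\<forall>j<R1. x1 j = x1' j)) \<and>
            ((\<forall>e\<in>E. head e = t2 \<longrightarrow> y e = y' e) \<longrightarrow> (\<forall>j<R2. x2 j = x2' j))"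
  proof (intro allI impI)
    fix x1 x2 y x1' x2' y'
    assume H: "x1 \<in> {..<R1} \<rightarrow> carrier K2 \<and> x2 \<in> {..<R2} \<rightarrow> carrier K2 \<and>
          x1' \<in> {..<R1} \<rightarrow> carrier K2 \<and> x2' \<in> {..<R2} \<rightarrow> carrier K2 \<and>
          code_edge_symbols K2 E tail head s1 s2 R1 R2 (\<alpha>c \<gamma>) (\<beta>c \<gamma>) x1 x2 y \<and>
          code_edge_symbols K2 E tail head s1 s2 R1 R2 (\<alpha>c \<gamma>) (\<beta>c \<gamma>) x1' x2' y'"
    have P: "x1 \<in> {..<R1} \<rightarrow> {0, 1}" "x2 \<in> {..<R2} \<rightarrow> {0, 1}"
      "x1' \<in> {..<R1} \<rightarrow> {0, 1}" "x2' \<in> {..<R2} \<rightarrow> {0, 1}"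
      using H unfolding K2_simps by (simp_all only:)
    have x1: "\<And>j. j < R1 \<Longrightarrow> x1 j \<in> {0, 1}" using P(1) by blast
    have x2: "\<And>j. j < R2 \<Longrightarrow> x2 j \<in> {0, 1}" using P(2) by blast
    have x1': "\<And>j. j < R1 \<Longrightarrow> x1' j \<in> {0, 1}" using P(3) by blast
    have x2': "\<And>j. j < R2 \<Longrightarrow> x2' j \<in> {0, 1}" using P(4) by blast
    have cs: "code_edge_symbols K2 E tail head s1 s2 R1 R2 (\<alpha>c \<gamma>) (\<beta>c \<gamma>) x1 x2 y"
      and cs': "code_edge_symbols K2 E tail head s1 s2 R1 R2 (\<alpha>c \<gamma>) (\<beta>c \<gamma>) x1' x2' y'"
      using H by (simp_all only:)
    have ye: "\<And>e. e \<in> E \<Longrightarrow> n2b (y e) = ip (gv \<gamma> (Inl e)) (zv x1 x2)"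
      by (rule y_eval[where ?x1.0=x1 and ?x2.0=x2 and \<gamma>=\<gamma> and y=y, OF x1 x2 cs])
    have ye': "\<And>e. e \<in> E \<Longrightarrow> n2b (y' e) = ip (gv \<gamma> (Inl e)) (zv x1' x2')"
      by (rule y_eval[where ?x1.0=x1' and ?x2.0=x2' and \<gamma>=\<gamma> and y=y', OF x1' x2' cs'])
    show "((\<forall>e\<in>E. head e = t1 \<longrightarrow> y e = y' e) \<longrightarrow> (\<forall>j<R1. x1 j = x1' j)) \<and>
            ((\<forall>e\<in>E. head e = t2 \<longrightarrow> y e = y' e) \<longrightarrow> (\<forall>j<R2. x2 j = x2' j))"
    proof (rule conjI)
    show "(\<forall>e\<in>E. head e = t1 \<longrightarrow> y e = y' e) \<longrightarrow> (\<forall>j<R1. x1 j = x1' j)"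
    proof (intro impI allI)
      fix j assume ag: "\<forall>e\<in>E. head e = t1 \<longrightarrow> y e = y' e" and j: "j < R1"
      have "zv x1 x2 j = zv x1' x2' j"
      proof (rule decode_final[where w="\<lambda>e. gv \<gamma> (Inl e)" and z="zv x1 x2" and z'="zv x1' x2'", OF _ finT U1[OF j]])
        fix f assume f: "f \<in> {e\<in>E. head e = t1}"
        then have "y f = y' f" using ag by blast
        then show "ip (gv \<gamma> (Inl f)) (zv x1 x2) = ip (gv \<gamma> (Inl f)) (zv x1' x2')"
          using ye[of f] ye'[of f] f by simp
      qed (use j in simp)
      then have "n2b (x1 j) = n2b (x1' j)" unfolding zv_def using j by simp
      then show "x1 j = x1' j" using n2b_inj x1 x1' j by blast
    qed
    show "(\<forall>e\<in>E. head e = t2 \<longrightarrow> y e = y' e) \<longrightarrow> (\<forall>j<R2. x2 j = x2' j)"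
    proof (intro impI allI)
      fix j assume ag: "\<forall>e\<in>E. head e = t2 \<longrightarrow> y e = y' e" and j: "j < R2"
      have "zv x1 x2 (R1 + j) = zv x1' x2' (R1 + j)"
      proof (rule decode_final[where w="\<lambda>e. gv \<gamma> (Inl e)" and z="zv x1 x2" and z'="zv x1' x2'", OF _ finT U2[OF j]])
        fix f assume f: "f \<in> {e\<in>E. head e = t2}"
        then have "y f = y' f" using ag by blast
        then show "ip (gv \<gamma> (Inl f)) (zv x1 x2) = ip (gv \<gamma> (Inl f)) (zv x1' x2')"
          using ye[of f] ye'[of f] f by simp
      qed (use j in simp)
      then have "n2b (x2 j) = n2b (x2' j)" unfolding zv_def using j by simp
      then show "x2 j = x2' j" using n2b_inj x2 x2' j by blast
    qed
    qed
  qed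
  qed
  moreover have "finite (carrier K2)" unfolding K2_simps by simp
  ultimately show ?thesis unfolding achievable_def using K2_field by blast
qed

end
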